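(* Let $0\le t<T$ and let $S^i,S^j$ be strictly positive continuous semimartingales on $[t,T]$, $Y^k=\log S^k$, $\alpha:=S^i_t$, $\beta:=S^j_t$. Then, with $F(z,z_0):=\frac{z-z_0}{z_0}-\log\frac{z}{z_0}$ for $z,z_0>0$: (a) $F(z,z_0)=\int_0^{z_0}\frac{(K-z)^+}{K^2}\mathrm dK+\int_{z_0}^\infty\frac{(z-K)^+}{K^2}\mathrm dK$, and $$F(x,\alpha)F(y,\beta)=\iint_{\mathbb R_+^2}\frac{\Pi_{ij}(x,y;K_1,K_2)}{K_1^2K_2^2}\,\mathrm dK_1\mathrm dK_2,$$ $$\Pi_{ij}(x,y;K_1,K_2):=\big((K_1-x)^+\mathbb 1_{\{K_1\le\alpha\}}+(x-K_1)^+\mathbb 1_{\{K_1>\alpha\}}\big)\big((K_2-y)^+\mathbb 1_{\{K_2\le\beta\}}+(y-K_2)^+\mathbb 1_{\{K_2>\beta\}}\big);$$ (b) writing $x=S^i_T$, $y=S^j_T$, the quadratic covariation over $[t,T]$ satisfies $$\langle Y^i,Y^j\rangle_{t,T}=\frac{Y^i_t}{\beta}(y-\beta)+\frac{Y^j_t}{\alpha}(x-\alpha)-Y^i_tF(y,\beta)-Y^j_tF(x,\alpha)+\frac{(x-\alpha)(y-\beta)}{\alpha\beta}-\frac{x-\alpha}{\alpha}F(y,\beta)-\frac{y-\beta}{\beta}F(x,\alpha)+F(x,\alpha)F(y,\beta)$$ $$\qquad-\int_t^T\frac{Y^i_u}{S^j_u}\mathrm dS^j_u-\int_t^T\frac{Y^j_u}{S^i_u}\mathrm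 dS^i_u+\frac12\int_t^T\frac{Y^i_u}{(S^j_u)^2}\mathrm d\langle S^j\rangle_u+\frac12\int_t^T\frac{Y^j_u}{(S^i_u)^2}\mathrm d\langle S^i\rangle_u,$$ and moreover $(x-\alpha)(y-\beta)=C_\alpha(x)C_\beta(y)-C_\alpha(x)P_\beta(y)-P_\alpha(x)C_\beta(y)+P_\alpha(x)P_\beta(y)$ with $C_a(z)=(z-a)^+$, $P_a(z)=(a-z)^+$.
   Context: $\langle Y^i,Y^j\rangle_{t,T}$ is the quadratic covariation of $Y^i,Y^j$ accumulated over $[t,T]$ and $\langle S^k\rangle$ the quadratic variation of $S^k$; all processes are continuous. *)

theory Defs
  imports "HOL-Probability.Probability"
begin

text \<open>Processes are functions X :: real => 'a => real (time, sample point).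
  Everything is relative to a probability space M and a filtration F.\<close>

definition is_filtration :: "'a measure \<Rightarrow> (real \<Rightarrow> 'a measure) \<Rightarrow> bool" where
  "is_filtration M F \<longleftrightarrow> (\<forall>s. subalgebra M (F s)) \<and> (\<forall>s u. s \<le> u \<longrightarrow> sets (F s) \<subseteq> sets (F u))"

definition adapted_on :: "(real \<Rightarrow> 'a measure) \<Rightarrow> real \<Rightarrow> real \<Rightarrow> (real \<Rightarrow> 'a \<Rightarrow> real) \<Rightarrow> bool" where
  "adapted_on F t T X \<longleftrightarrow> (\<forall>u\<in>{t..T}. X u \<in> borel_measurable (F u))"

definition continuous_paths_on :: "'a measure \<Rightarrow> real \<Rightarrow> real \<Rightarrow> (real \<Rightarrow> 'a \<Rightarrow> real) \<Rightarrow> bool" where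
  "continuous_paths_on M t T X \<longleftrightarrow> (AE \<omega> in M. continuous_on {t..T} (\<lambda>u. X u \<omega>))"

definition martingale_on :: "'a measure \<Rightarrow> (real \<Rightarrow> 'a measure) \<Rightarrow> real \<Rightarrow> real \<Rightarrow> (real \<Rightarrow> 'a \<Rightarrow> real) \<Rightarrow> bool" where
  "martingale_on M F t T X \<longleftrightarrow> adapted_on F t T X \<and> (\<forall>u\<in>{t..T}. integrable M (X u)) \<and>
     (\<forall>s u. t \<le> s \<longrightarrow> s \<le> u \<longrightarrow> u \<le> T \<longrightarrow>
        (AE \<omega> in M. real_cond_exp M (F s) (X u) \<omega> = X s \<omega>))"

definition cont_local_martingale_on :: "'a measure \<Rightarrow> (real \<Rightarrow> 'a measure) \<Rightarrow> real \<Rightarrow> real \<Rightarrow> (real \<Rightarrow> 'a \<Rightarrow> real) \<Rightarrow> bool" where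
  "cont_local_martingale_on M F t T X \<longleftrightarrow> adapted_on F t T X \<and> continuous_paths_on M t T X \<and>
     (\<exists>\<tau> :: nat \<Rightarrow> 'a \<Rightarrow> real. (\<forall>n. stopping_time F (\<tau> n)) \<and>
        (AE \<omega> in M. (\<forall>n. \<tau> n \<omega> \<le> \<tau> (Suc n) \<omega>) \<and> (\<exists>n. T \<le> \<tau> n \<omega>)) \<and>
        (\<forall>n. martingale_on M F t T (\<lambda>u \<omega>. X (max t (min u (\<tau> n \<omega>))) \<omega>)))"

definition bounded_variation_on :: "real \<Rightarrow> real \<Rightarrow> (real \<Rightarrow> real) \<Rightarrow> bool" where
  "bounded_variation_on a b f \<longleftrightarrow> (\<exists>B. \<forall>(n::nat) (p::nat \<Rightarrow> real). p 0 = a \<longrightarrow> p n = b \<longrightarrow>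
      (\<forall>k<n. p k \<le> p (Suc k)) \<longrightarrow> (\<Sum>k<n. \<bar>f (p (Suc k)) - f (p k)\<bar>) \<le> B)"

definition cont_semimartingale_on :: "'a measure \<Rightarrow> (real \<Rightarrow> 'a measure) \<Rightarrow> real \<Rightarrow> real \<Rightarrow> (real \<Rightarrow> 'a \<Rightarrow> real) \<Rightarrow> bool" where
  "cont_semimartingale_on M F t T X \<longleftrightarrow> adapted_on F t T X \<and> continuous_paths_on M t T X \<and>
     (\<exists>Mg A. cont_local_martingale_on M F t T Mg \<and> adapted_on F t T A \<and> continuous_paths_on M t T A \<and>
        (AE \<omega> in M. bounded_variation_on t T (\<lambda>u. A u \<omega>)) \<and>
        (AE \<omega> in M. Mg t \<omega> = 0 \<and> A t \<omega> = 0 \<and> (\<forall>u\<in>{t..T}. X u \<omega> = X t \<omega> + Mg u \<omega> + A u \<omega>)))"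

definition partition_seq :: "real \<Rightarrow> real \<Rightarrow> (nat \<Rightarrow> nat \<Rightarrow> real) \<Rightarrow> (nat \<Rightarrow> nat) \<Rightarrow> bool" where
  "partition_seq t T p N \<longleftrightarrow>
     (\<forall>n. p n 0 = t \<and> p n (N n) = T \<and> (\<forall>k<N n. p n k < p n (Suc k))) \<and>
     (\<lambda>n. Max ((\<lambda>k. p n (Suc k) - p n k) ` {..<N n})) \<longlonglongrightarrow> 0"

definition conv_in_prob :: "'a measure \<Rightarrow> (nat \<Rightarrow> 'a \<Rightarrow> real) \<Rightarrow> ('a \<Rightarrow> real) \<Rightarrow> bool" where
  "conv_in_prob M Z Z0 \<longleftrightarrow>
     (\<forall>e>0. (\<lambda>n. measure M {\<omega>\<in>space M. e < \<bar>Z n \<omega> - Z0 \<omega>\<bar>}) \<longlonglongrightarrow> 0)"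

definition is_stoch_integral :: "'a measure \<Rightarrow> real \<Rightarrow> real \<Rightarrow> (real \<Rightarrow> 'a \<Rightarrow> real) \<Rightarrow> (real \<Rightarrow> 'a \<Rightarrow> real) \<Rightarrow> ('a \<Rightarrow> real) \<Rightarrow> bool" where
  "is_stoch_integral M t T H X I \<longleftrightarrow> I \<in> borel_measurable M \<and>
     (\<forall>p N. partition_seq t T p N \<longrightarrow>
        conv_in_prob M (\<lambda>n \<omega>. \<Sum>k<N n. H (p n k) \<omega> * (X (p n (Suc k)) \<omega> - X (p n k) \<omega>)) I)"

text \<open>With H = 1 this is the quadratic
  covariation <X,Y>_{t,T}; with X = Y it is the integral against d<X>.\<close>
definition is_qcov_integral :: "'a measure \<Rightarrow> real \<Rightarrow> real \<Rightarrow> (real \<Rightarrow> 'a \<Rightarrow> real) \<Rightarrow> (real \<Rightarrow> 'a \<Rightarrow> real) \<Rightarrow> (real \<Rightarrow> 'a \<Rightarrow> real) \<Rightarrow> ('a \<Rightarrow> real) \<Rightarrow> bool" where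
  "is_qcov_integral M t T H X Y I \<longleftrightarrow> I \<in> borel_measurable M \<and>
     (\<forall>p N. partition_seq t T p N \<longrightarrow>
        conv_in_prob M (\<lambda>n \<omega>. \<Sum>k<N n. H (p n k) \<omega> * (X (p n (Suc k)) \<omega> - X (p n k) \<omega>)
                                     * (Y (p n (Suc k)) \<omega> - Y (p n k) \<omega>)) I)"

definition Ffun :: "real \<Rightarrow> real \<Rightarrow> real" where
  "Ffun z z0 = (z - z0) / z0 - ln (z / z0)"

definition Pi_ij :: "real \<Rightarrow> real \<Rightarrow> real \<Rightarrow> real \<Rightarrow> real \<Rightarrow> real \<Rightarrow> real" where
  "Pi_ij \<alpha> \<beta> x y K1 K2 =
     (max (K1 - x) 0 * (if K1 \<le> \<alpha> then 1 else 0) + max (x - K1) 0 * (if K1 > \<alpha> then 1 else 0)) *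
     (max (K2 - y) 0 * (if K2 \<le> \<beta> then 1 else 0) + max (y - K2) 0 * (if K2 > \<beta> then 1 else 0))"

definition Call :: "real \<Rightarrow> real \<Rightarrow> real" where "Call a z = max (z - a) 0"
definition Put :: "real \<Rightarrow> real \<Rightarrow> real" where "Put a z = max (a - z) 0"

end

theory Submission
  imports Defs
begin

context prob_space begin

lemma measure_tendsto_0_AE:
  assumes G: "\<And>n. G n \<in> events" and ev: "AE \<omega> in M. eventually (\<lambda>n. \<omega> \<notin> G n) sequentially"
  shows "(\<lambda>n. prob (G n)) \<longlonglongrightarrow> 0"
proof -
  have "(\<lambda>n. \<integral>\<omega>. indicator (G n) \<omega> \<partial>M) \<longlonglongrightarrow> (\<integral>\<omega>. (0::real) \<partial>M)"
  proof (rule integral_dominated_convergence[where w="\<lambda>_. 1"])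
    show "AE x in M. (\<lambda>i. indicator (G i) x :: real) \<longlonglongrightarrow> 0"
      using ev
    proof (rule AE_mp, intro AE_I2 impI)
      fix x assume "eventually (\<lambda>n. x \<notin> G n) sequentially"
      then have "eventually (\<lambda>n. indicator (G n) x = (0::real)) sequentially"
        by (rule eventually_mono) simp
      then show "(\<lambda>i. indicator (G i) x :: real) \<longlonglongrightarrow> 0"
        by (rule tendsto_eventually)
    qed
  qed (use G in auto)
  then show ?thesis using G by simp
qed

lemma AE_tendsto_conv_in_prob:
  assumes [measurable]: "\<And>n. Z n \<in> borel_measurable M" "Z0 \<in> borel_measurable M"
    and lim: "AE \<omega> in M. (\<lambda>n. Z n \<omega>) \<longlonglongrightarrow> Z0 \<omega>"
  shows "conv_in_prob M Z Z0"
  unfolding conv_in_prob_def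
proof (intro allI impI)
  fix e :: real assume e: "0 < e"
  show "(\<lambda>n. prob {\<omega> \<in> space M. e < \<bar>Z n \<omega> - Z0 \<omega>\<bar>}) \<longlonglongrightarrow> 0"
  proof (rule measure_tendsto_0_AE)
    show "AE \<omega> in M. eventually (\<lambda>n. \<omega> \<notin> {\<omega> \<in> space M. e < \<bar>Z n \<omega> - Z0 \<omega>\<bar>}) sequentially"
      using lim
    proof (rule AE_mp, intro AE_I2 impI)
      fix x assume "(\<lambda>n. Z n x) \<longlonglongrightarrow> Z0 x"
      then have "(\<lambda>n. Z n x - Z0 x) \<longlonglongrightarrow> 0" by (simp add: LIM_zero)
      then have "eventually (\<lambda>n. norm (Z n x - Z0 x) < e) sequentially"
        using e by (rule order_tendstoD(2)[OF tendsto_norm_zero]) 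
      then show "eventually (\<lambda>n. x \<notin> {\<omega> \<in> space M. e < \<bar>Z n \<omega> - Z0 \<omega>\<bar>}) sequentially"
        by (rule eventually_mono) auto
    qed
  qed measurable
qed

lemma measure_le_AE_Un:
  assumes "A \<in> events" "B \<in> events" "C \<in> events" "AE \<omega> in M. \<omega> \<in> A \<longrightarrow> \<omega> \<in> B \<or> \<omega> \<in> C"
  shows "prob A \<le> prob B + prob C"
proof -
  have "prob A \<le> prob (B \<union> C)"
    by (rule finite_measure_mono_AE) (use assms in auto)
  also have "\<dots> \<le> prob B + prob C" by (rule measure_Un_le) (use assms in auto)
  finally show ?thesis .
qed

lemma measure_le_AE_Un3:
  assumes "A \<in> events" "B \<in> events" "C \<in> events" "D \<in> events"
    "AE \<omega> in M. \<omega> \<in> A \<longrightarrow> \<omega> \<in> B \<or> \<omega> \<in> C \<or> \<omega> \<in> D"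
  shows "prob A \<le> prob B + prob C + prob D"
proof -
  have "prob A \<le> prob (B \<union> C \<union> D)"
    by (rule finite_measure_mono_AE) (use assms in auto)
  also have "\<dots> \<le> prob (B \<union> C) + prob D" by (rule measure_Un_le) (use assms in auto)
  also have "prob (B \<union> C) \<le> prob B + prob C" by (rule measure_Un_le) (use assms in auto)
  finally show ?thesis by simp
qed

end

definition tightP :: "'a measure \<Rightarrow> (nat \<Rightarrow> 'a \<Rightarrow> real) \<Rightarrow> bool" where
  "tightP M Z \<longleftrightarrow> (\<forall>e>0. \<exists>L. \<forall>n. measure M {\<omega>\<in>space M. L < \<bar>Z n \<omega>\<bar>} \<le> e)"

lemma tendsto_0_le_eps:
  fixes f :: "nat \<Rightarrow> real"
  assumes "\<And>n. 0 \<le> f n" "\<And>d. 0 < d \<Longrightarrow> eventually (\<lambda>n. f n \<le> d) sequentially"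
  shows "f \<longlonglongrightarrow> 0"
proof (rule order_tendstoI)
  fix a :: real assume "0 < a"
  then have "eventually (\<lambda>n. f n \<le> a/2) sequentially" using assms(2)[of "a/2"] by simp
  then show "eventually (\<lambda>n. f n < a) sequentially"
    by (rule eventually_mono) (use \<open>0<a\<close> in simp)
next
  fix a :: real assume "a < 0"
  then show "eventually (\<lambda>n. a < f n) sequentially" using assms(1)
    by (intro always_eventually) (metis less_le_trans)
qed

lemma conv_in_probD: "conv_in_prob M Z A \<Longrightarrow> 0 < e \<Longrightarrow>
   (\<lambda>n. measure M {\<omega>\<in>space M. e < \<bar>Z n \<omega> - A \<omega>\<bar>}) \<longlonglongrightarrow> 0"
  unfolding conv_in_prob_def by blast

context prob_space begin

lemma tightP_nonneg:
  assumes "tightP M Z" "0 < e" and [measurable]: "\<And>n. Z n \<in> borel_measurable M"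
  shows "\<exists>L>0. \<forall>n. prob {\<omega>\<in>space M. L < \<bar>Z n \<omega>\<bar>} \<le> e"
proof -
  obtain L where L: "\<And>n. prob {\<omega>\<in>space M. L < \<bar>Z n \<omega>\<bar>} \<le> e"
    using assms unfolding tightP_def by blast
  show ?thesis
  proof (intro exI[of _ "max L 0 + 1"] conjI allI)
    fix n
    have "prob {\<omega>\<in>space M. max L 0 + 1 < \<bar>Z n \<omega>\<bar>} \<le> prob {\<omega>\<in>space M. L < \<bar>Z n \<omega>\<bar>}"
      by (rule finite_measure_mono_AE) auto
    then show "prob {\<omega>\<in>space M. max L 0 + 1 < \<bar>Z n \<omega>\<bar>} \<le> e" using L[of n] by linarith
  qed auto
qed

lemma tightP_pathwise:
  assumes [measurable]: "\<And>n. Z n \<in> borel_measurable M"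
    and bd: "AE \<omega> in M. \<exists>B. \<forall>n. \<bar>Z n \<omega>\<bar> \<le> B"
  shows "tightP M Z"
  unfolding tightP_def
proof (intro allI impI)
  fix e :: real assume e: "0 < e"
  define G where "G L = {\<omega>\<in>space M. \<exists>n. real L < \<bar>Z n \<omega>\<bar>}" for L :: nat
  have [measurable]: "G L \<in> events" for L unfolding G_def by measurable
  have "(\<lambda>L. prob (G L)) \<longlonglongrightarrow> 0"
  proof (rule measure_tendsto_0_AE)
    show "AE \<omega> in M. eventually (\<lambda>L. \<omega> \<notin> G L) sequentially"
      using bd
    proof (rule AE_mp, intro AE_I2 impI)
      fix \<omega> assume "\<exists>B. \<forall>n. \<bar>Z n \<omega>\<bar> \<le> B"
      then obtain B where B: "\<And>n. \<bar>Z n \<omega>\<bar> \<le> B" by blast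
      obtain L0 :: nat where "B \<le> real L0" using real_arch_simple by blast
      then show "eventually (\<lambda>L. \<omega> \<notin> G L) sequentially"
        unfolding eventually_sequentially G_def
        by (intro exI[of _ L0]) (smt (verit, best) B mem_Collect_eq of_nat_mono)
    qed
  qed simp
  then have "eventually (\<lambda>L. prob (G L) < e) sequentially"
    using e by (rule order_tendstoD)
  then obtain L where L: "prob (G L) < e" by (auto simp: eventually_sequentially)
  show "\<exists>L. \<forall>n. prob {\<omega> \<in> space M. L < \<bar>Z n \<omega>\<bar>} \<le> e"
  proof (intro exI[of _ "real L"] allI)
    fix n
    have "prob {\<omega> \<in> space M. real L < \<bar>Z n \<omega>\<bar>} \<le> prob (G L)"
      by (rule finite_measure_mono_AE) (auto simp: G_def)
    then show "prob {\<omega> \<in> space M. real L < \<bar>Z n \<omega>\<bar>} \<le> e" using L by linarith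
  qed
qed

lemma tightP_mult:
  assumes [measurable]: "\<And>n. Z n \<in> borel_measurable M" "\<And>n. U n \<in> borel_measurable M"
    "\<And>n. V n \<in> borel_measurable M"
    and tU: "tightP M U" and tV: "tightP M V"
    and bd: "\<And>n. AE \<omega> in M. \<bar>Z n \<omega>\<bar> \<le> \<bar>U n \<omega>\<bar> * \<bar>V n \<omega>\<bar>"
  shows "tightP M Z"
  unfolding tightP_def
proof (intro allI impI)
  fix e :: real assume e: "0 < e"
  obtain L1 where L1: "L1 > 0" "\<And>n. prob {\<omega>\<in>space M. L1 < \<bar>U n \<omega>\<bar>} \<le> e/2"
    using tightP_nonneg[OF tU, of "e/2"] e assms(2) by auto
  obtain L2 where L2: "L2 > 0" "\<And>n. prob {\<omega>\<in>space M. L2 < \<bar>V n \<omega>\<bar>} \<le> e/2"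
    using tightP_nonneg[OF tV, of "e/2"] e assms(3) by auto
  show "\<exists>L. \<forall>n. prob {\<omega> \<in> space M. L < \<bar>Z n \<omega>\<bar>} \<le> e"
  proof (intro exI[of _ "L1 * L2"] allI)
    fix n
    have "prob {\<omega> \<in> space M. L1 * L2 < \<bar>Z n \<omega>\<bar>} \<le>
      prob {\<omega>\<in>space M. L1 < \<bar>U n \<omega>\<bar>} + prob {\<omega>\<in>space M. L2 < \<bar>V n \<omega>\<bar>}"
    proof (rule measure_le_AE_Un)
      show "AE \<omega> in M. \<omega> \<in> {\<omega> \<in> space M. L1 * L2 < \<bar>Z n \<omega>\<bar>} \<longrightarrow>
          \<omega> \<in> {\<omega> \<in> space M. L1 < \<bar>U n \<omega>\<bar>} \<or> \<omega> \<in> {\<omega> \<in> space M. L2 < \<bar>V n \<omega>\<bar>}"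
        using bd[of n]
      proof (rule AE_mp, intro AE_I2 impI)
        fix \<omega> assume "\<omega> \<in> space M" "\<bar>Z n \<omega>\<bar> \<le> \<bar>U n \<omega>\<bar> * \<bar>V n \<omega>\<bar>"
          "\<omega> \<in> {\<omega> \<in> space M. L1 * L2 < \<bar>Z n \<omega>\<bar>}"
        moreover have "\<bar>U n \<omega>\<bar> \<le> L1 \<Longrightarrow> \<bar>V n \<omega>\<bar> \<le> L2 \<Longrightarrow> \<bar>U n \<omega>\<bar> * \<bar>V n \<omega>\<bar> \<le> L1 * L2"
          using L1 L2 by (intro mult_mono) auto
        ultimately show "\<omega> \<in> {\<omega> \<in> space M. L1 < \<bar>U n \<omega>\<bar>} \<or> \<omega> \<in> {\<omega> \<in> space M. L2 < \<bar>V n \<omega>\<bar>}"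
          by force
      qed
    qed measurable
    then show "prob {\<omega> \<in> space M. L1 * L2 < \<bar>Z n \<omega>\<bar>} \<le> e" using L1(2)[of n] L2(2)[of n] by linarith
  qed
qed

lemma tightP_add:
  assumes [measurable]: "\<And>n. Z n \<in> borel_measurable M" "\<And>n. U n \<in> borel_measurable M"
    "\<And>n. V n \<in> borel_measurable M"
    and tU: "tightP M U" and tV: "tightP M V"
    and bd: "\<And>n. AE \<omega> in M. \<bar>Z n \<omega>\<bar> \<le> \<bar>U n \<omega>\<bar> + \<bar>V n \<omega>\<bar>"
  shows "tightP M Z"
  unfolding tightP_def
proof (intro allI impI)
  fix e :: real assume e: "0 < e"
  obtain L1 where L1: "L1 > 0" "\<And>n. prob {\<omega>\<in>space M. L1 < \<bar>U n \<omega>\<bar>} \<le> e/2"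
    using tightP_nonneg[OF tU, of "e/2"] e assms(2) by auto
  obtain L2 where L2: "L2 > 0" "\<And>n. prob {\<omega>\<in>space M. L2 < \<bar>V n \<omega>\<bar>} \<le> e/2"
    using tightP_nonneg[OF tV, of "e/2"] e assms(3) by auto
  show "\<exists>L. \<forall>n. prob {\<omega> \<in> space M. L < \<bar>Z n \<omega>\<bar>} \<le> e"
  proof (intro exI[of _ "L1 + L2"] allI)
    fix n
    have "prob {\<omega> \<in> space M. L1 + L2 < \<bar>Z n \<omega>\<bar>} \<le>
      prob {\<omega>\<in>space M. L1 < \<bar>U n \<omega>\<bar>} + prob {\<omega>\<in>space M. L2 < \<bar>V n \<omega>\<bar>}"
    proof (rule measure_le_AE_Un)
      show "AE \<omega> in M. \<omega> \<in> {\<omega> \<in> space M. L1 + L2 < \<bar>Z n \<omega>\<bar>} \<longrightarrow>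
          \<omega> \<in> {\<omega> \<in> space M. L1 < \<bar>U n \<omega>\<bar>} \<or> \<omega> \<in> {\<omega> \<in> space M. L2 < \<bar>V n \<omega>\<bar>}"
        using bd[of n] by (rule AE_mp, intro AE_I2 impI) force
    qed measurable
    then show "prob {\<omega> \<in> space M. L1 + L2 < \<bar>Z n \<omega>\<bar>} \<le> e" using L1(2)[of n] L2(2)[of n] by linarith
  qed
qed

lemma conv_small:
  assumes [measurable]: "\<And>n. Z n \<in> borel_measurable M" "\<And>n. U n \<in> borel_measurable M"
    "\<And>n. W n \<in> borel_measurable M"
    and tU: "tightP M U" and W: "conv_in_prob M W (\<lambda>_. 0)"
    and bd: "\<And>n. AE \<omega> in M. \<bar>W n \<omega>\<bar> \<le> 1/2 \<longrightarrow> \<bar>Z n \<omega>\<bar> \<le> \<bar>U n \<omega>\<bar> * \<bar>W n \<omega>\<bar>"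
  shows "conv_in_prob M Z (\<lambda>_. 0)"
  unfolding conv_in_prob_def
proof (intro allI impI)
  fix e :: real assume e: "0 < e"
  show "(\<lambda>n. prob {\<omega> \<in> space M. e < \<bar>Z n \<omega> - 0\<bar>}) \<longlonglongrightarrow> 0"
  proof (rule tendsto_0_le_eps)
    fix d :: real assume d: "0 < d"
    obtain L where L: "L > 0" "\<And>n. prob {\<omega>\<in>space M. L < \<bar>U n \<omega>\<bar>} \<le> d/2"
      using tightP_nonneg[OF tU, of "d/2"] d assms(2) by auto
    have t1: "(\<lambda>n. prob {\<omega> \<in> space M. 1/2 < \<bar>W n \<omega> - 0\<bar>}) \<longlonglongrightarrow> 0"
      using conv_in_probD[OF W, of "1/2"] by simp
    have t2: "(\<lambda>n. prob {\<omega> \<in> space M. e/L < \<bar>W n \<omega> - 0\<bar>}) \<longlonglongrightarrow> 0"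
      using conv_in_probD[OF W, of "e/L"] e L by simp
    have "(\<lambda>n. prob {\<omega> \<in> space M. 1/2 < \<bar>W n \<omega> - 0\<bar>} + prob {\<omega> \<in> space M. e/L < \<bar>W n \<omega> - 0\<bar>}) \<longlonglongrightarrow> 0"
      using tendsto_add[OF t1 t2] by simp
    then have ev: "eventually (\<lambda>n. prob {\<omega> \<in> space M. 1/2 < \<bar>W n \<omega> - 0\<bar>} + prob {\<omega> \<in> space M. e/L < \<bar>W n \<omega> - 0\<bar>} < d/2) sequentially"
      using d by (intro order_tendstoD) auto
    show "eventually (\<lambda>n. prob {\<omega> \<in> space M. e < \<bar>Z n \<omega> - 0\<bar>} \<le> d) sequentially"
      using ev
    proof (rule eventually_mono)
      fix n assume n: "prob {\<omega> \<in> space M. 1/2 < \<bar>W n \<omega> - 0\<bar>} + prob {\<omega> \<in> space M. e/L < \<bar>W n \<omega> - 0\<bar>} < d/2"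
      have "prob {\<omega> \<in> space M. e < \<bar>Z n \<omega> - 0\<bar>} \<le> prob {\<omega> \<in> space M. 1/2 < \<bar>W n \<omega> - 0\<bar>}
         + prob {\<omega>\<in>space M. L < \<bar>U n \<omega>\<bar>} + prob {\<omega> \<in> space M. e/L < \<bar>W n \<omega> - 0\<bar>}"
      proof (rule measure_le_AE_Un3)
        show "AE \<omega> in M. \<omega> \<in> {\<omega> \<in> space M. e < \<bar>Z n \<omega> - 0\<bar>} \<longrightarrow>
          \<omega> \<in> {\<omega> \<in> space M. 1/2 < \<bar>W n \<omega> - 0\<bar>} \<or> \<omega> \<in> {\<omega>\<in>space M. L < \<bar>U n \<omega>\<bar>} \<or> \<omega> \<in> {\<omega> \<in> space M. e/L < \<bar>W n \<omega> - 0\<bar>}"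
          using bd[of n]
        proof (rule AE_mp, intro AE_I2 impI)
          fix \<omega> assume a: "\<omega> \<in> space M" "\<bar>W n \<omega>\<bar> \<le> 1/2 \<longrightarrow> \<bar>Z n \<omega>\<bar> \<le> \<bar>U n \<omega>\<bar> * \<bar>W n \<omega>\<bar>"
            "\<omega> \<in> {\<omega> \<in> space M. e < \<bar>Z n \<omega> - 0\<bar>}"
          show "\<omega> \<in> {\<omega> \<in> space M. 1/2 < \<bar>W n \<omega> - 0\<bar>} \<or> \<omega> \<in> {\<omega>\<in>space M. L < \<bar>U n \<omega>\<bar>} \<or> \<omega> \<in> {\<omega> \<in> space M. e/L < \<bar>W n \<omega> - 0\<bar>}"
          proof (rule ccontr)
            assume "\<not> ?thesis"
            then have b: "\<bar>W n \<omega>\<bar> \<le> 1/2" "\<bar>U n \<omega>\<bar> \<le> L" "\<bar>W n \<omega>\<bar> \<le> e/L" using a by auto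
            then have "\<bar>U n \<omega>\<bar> * \<bar>W n \<omega>\<bar> \<le> L * (e/L)" by (intro mult_mono) auto
            then have "\<bar>Z n \<omega>\<bar> \<le> e" using a b L by auto
            then show False using a by auto
          qed
        qed
      qed measurable
      then show "prob {\<omega> \<in> space M. e < \<bar>Z n \<omega> - 0\<bar>} \<le> d" using n L(2)[of n] by linarith
    qed
  qed simp
qed

lemma conv_add:
  assumes [measurable]: "\<And>n. Z n \<in> borel_measurable M" "\<And>n. W n \<in> borel_measurable M"
    "A \<in> borel_measurable M" "B \<in> borel_measurable M"
    and cZ: "conv_in_prob M Z A" and cW: "conv_in_prob M W B"
  shows "conv_in_prob M (\<lambda>n \<omega>. Z n \<omega> + W n \<omega>) (\<lambda>\<omega>. A \<omega> + B \<omega>)"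
  unfolding conv_in_prob_def
proof (intro allI impI)
  fix e :: real assume e: "0 < e"
  have t: "(\<lambda>n. prob {\<omega> \<in> space M. e/2 < \<bar>Z n \<omega> - A \<omega>\<bar>} + prob {\<omega> \<in> space M. e/2 < \<bar>W n \<omega> - B \<omega>\<bar>}) \<longlonglongrightarrow> 0"
    using tendsto_add[OF conv_in_probD[OF cZ, of "e/2"] conv_in_probD[OF cW, of "e/2"]] e by simp
  show "(\<lambda>n. prob {\<omega> \<in> space M. e < \<bar>Z n \<omega> + W n \<omega> - (A \<omega> + B \<omega>)\<bar>}) \<longlonglongrightarrow> 0"
  proof (rule tendsto_sandwich[OF _ _ tendsto_const t])
    show "\<forall>\<^sub>F n in sequentially. 0 \<le> prob {\<omega> \<in> space M. e < \<bar>Z n \<omega> + W n \<omega> - (A \<omega> + B \<omega>)\<bar>}" by simp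
    show "\<forall>\<^sub>F n in sequentially. prob {\<omega> \<in> space M. e < \<bar>Z n \<omega> + W n \<omega> - (A \<omega> + B \<omega>)\<bar>} \<le>
      prob {\<omega> \<in> space M. e/2 < \<bar>Z n \<omega> - A \<omega>\<bar>} + prob {\<omega> \<in> space M. e/2 < \<bar>W n \<omega> - B \<omega>\<bar>}"
    proof (intro always_eventually allI measure_le_AE_Un AE_I2 impI)
      fix n \<omega> assume "\<omega> \<in> {\<omega> \<in> space M. e < \<bar>Z n \<omega> + W n \<omega> - (A \<omega> + B \<omega>)\<bar>}"
      moreover have "\<bar>Z n \<omega> + W n \<omega> - (A \<omega> + B \<omega>)\<bar> \<le> \<bar>Z n \<omega> - A \<omega>\<bar> + \<bar>W n \<omega> - B \<omega>\<bar>"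
        by linarith
      ultimately show "\<omega> \<in> {\<omega> \<in> space M. e/2 < \<bar>Z n \<omega> - A \<omega>\<bar>} \<or> \<omega> \<in> {\<omega> \<in> space M. e/2 < \<bar>W n \<omega> - B \<omega>\<bar>}"
        by auto
    qed measurable
  qed
qed

lemma conv_cmult:
  assumes cZ: "conv_in_prob M Z A"
  shows "conv_in_prob M (\<lambda>n \<omega>. c * Z n \<omega>) (\<lambda>\<omega>. c * A \<omega>)"
proof (cases "c = 0")
  case True then show ?thesis unfolding conv_in_prob_def by simp
next
  case False
  show ?thesis unfolding conv_in_prob_def
  proof (intro allI impI)
    fix e :: real assume e: "0 < e"
    have "{\<omega> \<in> space M. e < \<bar>c * Z n \<omega> - c * A \<omega>\<bar>} = {\<omega> \<in> space M. e / \<bar>c\<bar> < \<bar>Z n \<omega> - A \<omega>\<bar>}" for n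
      using False by (auto simp: right_diff_distrib[symmetric] abs_mult divide_less_eq mult.commute)
    then show "(\<lambda>n. prob {\<omega> \<in> space M. e < \<bar>c * Z n \<omega> - c * A \<omega>\<bar>}) \<longlonglongrightarrow> 0"
      using cZ e False unfolding conv_in_prob_def by simp
  qed
qed

lemma conv_unique:
  assumes [measurable]: "\<And>n. Z n \<in> borel_measurable M" "A \<in> borel_measurable M" "B \<in> borel_measurable M"
    and cA: "conv_in_prob M Z A" and cB: "conv_in_prob M Z B"
  shows "AE \<omega> in M. A \<omega> = B \<omega>"
proof -
  have z: "prob {\<omega> \<in> space M. e < \<bar>A \<omega> - B \<omega>\<bar>} = 0" if e: "0 < e" for e
  proof -
    have t: "(\<lambda>n. prob {\<omega> \<in> space M. e/2 < \<bar>Z n \<omega> - A \<omega>\<bar>} + prob {\<omega> \<in> space M. e/2 < \<bar>Z n \<omega> - B \<omega>\<bar>}) \<longlonglongrightarrow> 0"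
      using tendsto_add[OF conv_in_probD[OF cA, of "e/2"] conv_in_probD[OF cB, of "e/2"]] e by simp
    have "prob {\<omega> \<in> space M. e < \<bar>A \<omega> - B \<omega>\<bar>} \<le> 0"
    proof (rule tendsto_le[OF _ t tendsto_const])
      show "\<forall>\<^sub>F n in sequentially. prob {\<omega> \<in> space M. e < \<bar>A \<omega> - B \<omega>\<bar>} \<le>
        prob {\<omega> \<in> space M. e/2 < \<bar>Z n \<omega> - A \<omega>\<bar>} + prob {\<omega> \<in> space M. e/2 < \<bar>Z n \<omega> - B \<omega>\<bar>}"
      proof (intro always_eventually allI measure_le_AE_Un AE_I2 impI)
        fix n \<omega> assume "\<omega> \<in> {\<omega> \<in> space M. e < \<bar>A \<omega> - B \<omega>\<bar>}"
        moreover have "\<bar>A \<omega> - B \<omega>\<bar> \<le> \<bar>Z n \<omega> - A \<omega>\<bar> + \<bar>Z n \<omega> - B \<omega>\<bar>"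
          by linarith
        ultimately show "\<omega> \<in> {\<omega> \<in> space M. e/2 < \<bar>Z n \<omega> - A \<omega>\<bar>} \<or> \<omega> \<in> {\<omega> \<in> space M. e/2 < \<bar>Z n \<omega> - B \<omega>\<bar>}"
          by auto
      qed measurable
    qed simp
    then show ?thesis by (simp add: measure_le_0_iff)
  qed
  have "AE \<omega> in M. \<forall>m::nat. \<bar>A \<omega> - B \<omega>\<bar> \<le> 1 / (real m + 1)"
  proof (subst AE_all_countable, intro allI)
    fix m :: nat
    have "AE \<omega> in M. \<omega> \<notin> {\<omega> \<in> space M. 1 / (real m + 1) < \<bar>A \<omega> - B \<omega>\<bar>}"
      using z[of "1 / (real m + 1)"] by (subst prob_eq_0[symmetric]) auto
    then show "AE \<omega> in M. \<bar>A \<omega> - B \<omega>\<bar> \<le> 1 / (real m + 1)"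
      by (rule AE_mp) (auto intro!: AE_I2)
  qed
  then show ?thesis
  proof (rule AE_mp, intro AE_I2 impI)
    fix \<omega> assume h: "\<forall>m::nat. \<bar>A \<omega> - B \<omega>\<bar> \<le> 1 / (real m + 1)"
    have "\<bar>A \<omega> - B \<omega>\<bar> \<le> 0"
    proof (rule field_le_epsilon)
      fix d :: real assume "0 < d"
      then obtain m :: nat where "1 / (real m + 1) < d"
        by (metis nat_approx_posE of_nat_Suc add.commute)
      then show "\<bar>A \<omega> - B \<omega>\<bar> \<le> 0 + d" using h by (smt (verit))
    qed
    then show "A \<omega> = B \<omega>" by simp
  qed
qed

lemma conv_AE_cong:
  assumes [measurable]: "\<And>n. Z n \<in> borel_measurable M" "\<And>n. Z' n \<in> borel_measurable M"
    "A \<in> borel_measurable M" 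
    and cZ: "conv_in_prob M Z A" and eq: "\<And>n. AE \<omega> in M. Z n \<omega> = Z' n \<omega>"
  shows "conv_in_prob M Z' A"
  unfolding conv_in_prob_def
proof (intro allI impI)
  fix e :: real assume e: "0 < e"
  have "prob {\<omega> \<in> space M. e < \<bar>Z' n \<omega> - A \<omega>\<bar>} = prob {\<omega> \<in> space M. e < \<bar>Z n \<omega> - A \<omega>\<bar>}" for n
  proof (rule measure_eq_AE)
    show "AE x in M. (x \<in> {\<omega> \<in> space M. e < \<bar>Z' n \<omega> - A \<omega>\<bar>}) = (x \<in> {\<omega> \<in> space M. e < \<bar>Z n \<omega> - A \<omega>\<bar>})"
      using eq[of n] by (rule AE_mp) (auto intro!: AE_I2)
  qed measurable
  then show "(\<lambda>n. prob {\<omega> \<in> space M. e < \<bar>Z' n \<omega> - A \<omega>\<bar>}) \<longlonglongrightarrow> 0"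
    using cZ e unfolding conv_in_prob_def by simp
qed

end

lemma partition_mono:
  assumes "partition_seq t T p N" "i \<le> j" "j \<le> N n"
  shows "p n i \<le> p n j"
  using assms(2,3)
proof (induction j)
  case 0 then show ?case by simp
next
  case (Suc j)
  show ?case
  proof (cases "i = Suc j")
    case False
    then have "p n i \<le> p n j" using Suc by simp
    moreover have "p n j < p n (Suc j)" using assms(1) Suc.prems unfolding partition_seq_def by auto
    ultimately show ?thesis by simp
  qed simp
qed

lemma partition_in:
  assumes "partition_seq t T p N" "k \<le> N n"
  shows "t \<le> p n k" "p n k \<le> T"
proof -
  have "p n 0 \<le> p n k" "p n k \<le> p n (N n)" using partition_mono[OF assms(1)] assms(2) by auto
  then show "t \<le> p n k" "p n k \<le> T" using assms(1) unfolding partition_seq_def by auto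
qed

lemma partition_step_le:
  assumes "partition_seq t T p N" "k < N n"
  shows "p n (Suc k) - p n k \<le> Max ((\<lambda>k. p n (Suc k) - p n k) ` {..<N n})"
  using assms(2) by (intro Max_ge) auto

lemma maxinc_tendsto:
  assumes P: "partition_seq t T p N" and f: "continuous_on {t..T} f"
  shows "(\<lambda>n. Max (insert 0 ((\<lambda>k. \<bar>f (p n (Suc k)) - f (p n k)\<bar>) ` {..<N n}))) \<longlonglongrightarrow> (0::real)"
proof -
  have uc: "uniformly_continuous_on {t..T} f"
    using f by (rule compact_uniformly_continuous) auto
  have mesh: "(\<lambda>n. Max ((\<lambda>k. p n (Suc k) - p n k) ` {..<N n})) \<longlonglongrightarrow> 0"
    using P unfolding partition_seq_def by blast
  show "(\<lambda>n. Max (insert 0 ((\<lambda>k. \<bar>f (p n (Suc k)) - f (p n k)\<bar>) ` {..<N n}))) \<longlonglongrightarrow> 0"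
  proof (rule order_tendstoI)
    fix a :: real assume a: "0 < a"
    obtain d where d: "d > 0" "\<And>x x'. x \<in> {t..T} \<Longrightarrow> x' \<in> {t..T} \<Longrightarrow> dist x' x < d \<Longrightarrow> dist (f x') (f x) < a"
      using uc a unfolding uniformly_continuous_on_def by metis
    have "eventually (\<lambda>n. Max ((\<lambda>k. p n (Suc k) - p n k) ` {..<N n}) < d) sequentially"
      using mesh d(1) by (rule order_tendstoD)
    then show "eventually (\<lambda>n. Max (insert 0 ((\<lambda>k. \<bar>f (p n (Suc k)) - f (p n k)\<bar>) ` {..<N n})) < a) sequentially"
    proof (rule eventually_mono)
      fix n assume n: "Max ((\<lambda>k. p n (Suc k) - p n k) ` {..<N n}) < d"
      have "\<bar>f (p n (Suc k)) - f (p n k)\<bar> < a" if k: "k < N n" for k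
      proof -
        have "p n k \<le> p n (Suc k)" using partition_mono[OF P, of k "Suc k" n] k by simp
        moreover have "p n (Suc k) - p n k < d" using partition_step_le[OF P k] n by simp
        ultimately have "dist (p n (Suc k)) (p n k) < d" by (simp add: dist_real_def)
        moreover have "p n k \<in> {t..T}" "p n (Suc k) \<in> {t..T}" using partition_in[OF P, of k n] partition_in[OF P, of "Suc k" n] k by auto
        ultimately show ?thesis using d(2) by (simp add: dist_real_def)
      qed
      then show "Max (insert 0 ((\<lambda>k. \<bar>f (p n (Suc k)) - f (p n k)\<bar>) ` {..<N n})) < a"
        using a by (subst Max_less_iff) auto
    qed
  next
    fix a :: real assume "a < 0"
    then show "eventually (\<lambda>n. a < Max (insert 0 ((\<lambda>k. \<bar>f (p n (Suc k)) - f (p n k)\<bar>) ` {..<N n}))) sequentially"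
      by (intro always_eventually allI) (smt (verit) Max_ge finite_imageI finite_insert finite_lessThan insertI1)
  qed
qed

lemma ln_taylor3:
  fixes r :: real
  assumes r: "\<bar>r\<bar> \<le> 1/2"
  shows "\<bar>ln (1 + r) - r + r^2/2\<bar> \<le> 2 * \<bar>r\<bar>^3"
proof -
  define h where "h s = ln (1 + s) - s + s^2/2" for s :: real
  have D: "DERIV h s :> s^2 / (1 + s)" if "-1 < s" for s
  proof -
    have "DERIV h s :> (1 / (1 + s) - 1 + s)"
      unfolding h_def using that by (auto intro!: derivative_eq_intros simp: power2_eq_square)
    moreover have "1 / (1 + s) - 1 + s = s^2 / (1 + s)" using that
      by (simp add: field_simps power2_eq_square)
    ultimately show ?thesis by simp
  qed
  have h0: "h 0 = 0" unfolding h_def by simp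
  have bnd: "\<bar>z^2 / (1 + z)\<bar> \<le> 2 * r^2" if "\<bar>z\<bar> \<le> \<bar>r\<bar>" for z
  proof -
    have z: "1/2 \<le> 1 + z" "z^2 \<le> r^2" using that r by (arith, simp add: abs_le_square_iff)
    have "\<bar>z^2 / (1 + z)\<bar> = z^2 / (1 + z)" using z by simp
    also have "\<dots> \<le> r^2 / (1/2)" using z by (intro frac_le) auto
    finally show ?thesis by simp
  qed
  consider "r = 0" | "0 < r" | "r < 0" by linarith
  then have "\<bar>h r\<bar> \<le> 2 * \<bar>r\<bar>^3"
  proof cases
    case 1 then show ?thesis using h0 by simp
  next
    case 2
    obtain z where z: "0 < z" "z < r" "h r - h 0 = (r - 0) * (z^2 / (1 + z))"
      using MVT2[of 0 r h "\<lambda>s. s^2/(1+s)"] 2 D r by force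
    then have "\<bar>h r\<bar> = \<bar>r\<bar> * \<bar>z^2 / (1 + z)\<bar>" using h0 by (simp add: abs_mult)
    also have "\<dots> \<le> \<bar>r\<bar> * (2 * r^2)" using bnd[of z] z by (intro mult_left_mono) auto
    finally show ?thesis by (simp add: power3_eq_cube power2_eq_square abs_mult)
  next
    case 3
    obtain z where z: "r < z" "z < 0" "h 0 - h r = (0 - r) * (z^2 / (1 + z))"
      using MVT2[of r 0 h "\<lambda>s. s^2/(1+s)"] 3 D r by force
    then have "\<bar>h r\<bar> = \<bar>r\<bar> * \<bar>z^2 / (1 + z)\<bar>" using h0 by (simp add: abs_mult)
    also have "\<dots> \<le> \<bar>r\<bar> * (2 * r^2)" using bnd[of z] z by (intro mult_left_mono) auto
    finally show ?thesis by (simp add: power3_eq_cube power2_eq_square abs_mult)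
  qed
  then show ?thesis unfolding h_def .
qed

definition huber :: "real \<Rightarrow> real \<Rightarrow> real" where
  "huber c x = (if \<bar>x\<bar> \<le> c then x^2 else 2 * c * \<bar>x\<bar> - c^2)"

definition huberd :: "real \<Rightarrow> real \<Rightarrow> real" where
  "huberd c x = 2 * max (-c) (min c x)"

lemma huber_nonneg: "0 \<le> c \<Longrightarrow> 0 \<le> huber c x"
proof -
  assume c: "0 \<le> c"
  have "c*c \<le> c * \<bar>x\<bar>" if "\<not> \<bar>x\<bar> \<le> c" using mult_left_mono[of c "\<bar>x\<bar>" c] c that by simp
  moreover have "0 \<le> c * \<bar>x\<bar>" using c by simp
  ultimately show ?thesis unfolding huber_def by (auto simp: power2_eq_square)
qed

lemma huber_le: "0 \<le> c \<Longrightarrow> huber c x \<le> 2 * c * \<bar>x\<bar>"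
proof -
  assume c: "0 \<le> c"
  have "x^2 \<le> 2 * c * \<bar>x\<bar>" if "\<bar>x\<bar> \<le> c"
  proof -
    have a: "x^2 \<le> c * \<bar>x\<bar>"
      using mult_right_mono[OF that, of "\<bar>x\<bar>"] by (simp add: power2_eq_square abs_mult[symmetric])
    have "0 \<le> c * \<bar>x\<bar>" using c by simp
    then have "x^2 \<le> 2 * (c * \<bar>x\<bar>)" using a by linarith
    then show ?thesis by (simp add: mult.assoc)
  qed
  moreover have "c*c \<le> c * \<bar>x\<bar>" if "\<not> \<bar>x\<bar> \<le> c" using mult_left_mono[of c "\<bar>x\<bar>" c] c that by simp
  moreover have "0 \<le> c * \<bar>x\<bar>" using c by simp
  ultimately show ?thesis unfolding huber_def using c by (auto simp: power2_eq_square)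
qed

lemma huberd_bound: "0 \<le> c \<Longrightarrow> \<bar>huberd c x\<bar> \<le> 2 * c"
  unfolding huberd_def by auto

lemma huber_in: "\<bar>x\<bar> \<le> c \<Longrightarrow> \<bar>y\<bar> \<le> c \<Longrightarrow> huber c y - huber c x - huberd c x * (y - x) = (y - x)^2"
  unfolding huber_def huberd_def by (auto simp: power2_eq_square algebra_simps)

lemma huber_convex:
  assumes c: "0 \<le> c" shows "0 \<le> huber c y - huber c x - huberd c x * (y - x)"
proof -
  consider "\<bar>x\<bar> \<le> c" "\<bar>y\<bar> \<le> c" | "\<bar>x\<bar> \<le> c" "y > c" | "\<bar>x\<bar> \<le> c" "y < -c"
    | "x > c" "\<bar>y\<bar> \<le> c" | "x > c" "y > c" | "x > c" "y < -c"
    | "x < -c" "\<bar>y\<bar> \<le> c" | "x < -c" "y > c" | "x < -c" "y < -c" by linarith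
  then show ?thesis
  proof cases
    case 1 then show ?thesis using huber_in[of x c y] by simp
  next
    case 2
    then have "huber c y - huber c x - huberd c x * (y - x) = (y - x)^2 - (y - c)^2"
      unfolding huber_def huberd_def by (auto simp: power2_eq_square algebra_simps)
    moreover have "(y - c)^2 \<le> (y - x)^2" using 2 by (intro power_mono) auto
    ultimately show ?thesis by simp
  next
    case 3
    then have "huber c y - huber c x - huberd c x * (y - x) = (y - x)^2 - (y + c)^2"
      unfolding huber_def huberd_def by (auto simp: power2_eq_square algebra_simps)
    moreover have "(y + c)^2 \<le> (y - x)^2"
    proof -
      have "(-(y + c))^2 \<le> (x - y)^2" using 3 by (intro power_mono) auto
      then show ?thesis by (simp add: power2_commute add.commute)
    qed
    ultimately show ?thesis by simp
  next
    case 4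
    then have "huber c y - huber c x - huberd c x * (y - x) = (y - c)^2"
      unfolding huber_def huberd_def by (auto simp: power2_eq_square algebra_simps)
    then show ?thesis by simp
  next
    case 5
    then have "\<bar>x\<bar> = x" "\<bar>y\<bar> = y" "\<not> \<bar>x\<bar> \<le> c" "\<not> \<bar>y\<bar> \<le> c" using c by auto
    then show ?thesis unfolding huber_def huberd_def using 5 c by (auto simp: algebra_simps max_def)
  next
    case 6
    then have "\<bar>x\<bar> = x" "\<bar>y\<bar> = -y" "\<not> \<bar>x\<bar> \<le> c" "\<not> \<bar>y\<bar> \<le> c" using c by auto
    then show ?thesis unfolding huber_def huberd_def using 6 c mult_nonneg_nonpos[of c y] by (auto simp: algebra_simps max_def)
  next
    case 7
    then have "huber c y - huber c x - huberd c x * (y - x) = (y + c)^2"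
      unfolding huber_def huberd_def by (auto simp: power2_eq_square algebra_simps)
    then show ?thesis by simp
  next
    case 8
    then have "\<bar>x\<bar> = -x" "\<bar>y\<bar> = y" "\<not> \<bar>x\<bar> \<le> c" "\<not> \<bar>y\<bar> \<le> c" using c by auto
    then show ?thesis unfolding huber_def huberd_def using 8 c mult_nonneg_nonpos[of c x] by (auto simp: algebra_simps max_def)
  next
    case 9
    then have "\<bar>x\<bar> = -x" "\<bar>y\<bar> = -y" "\<not> \<bar>x\<bar> \<le> c" "\<not> \<bar>y\<bar> \<le> c" using c by auto
    then show ?thesis unfolding huber_def huberd_def using 9 c by (auto simp: algebra_simps max_def)
  qed
qed

lemma huber_measurable [measurable]: assumes [measurable]: "f \<in> borel_measurable M"
  shows "(\<lambda>\<omega>. huber c (f \<omega>)) \<in> borel_measurable M"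
  unfolding huber_def by measurable

lemma huberd_measurable [measurable]: assumes [measurable]: "f \<in> borel_measurable M"
  shows "(\<lambda>\<omega>. huberd c (f \<omega>)) \<in> borel_measurable M"
  unfolding huberd_def by measurable

lemma filt_sfs:
  assumes "prob_space M" "is_filtration M F"
  shows "sigma_finite_subalgebra M (F s)"
proof (rule finite_measure_subalgebra_is_sigma_finite)
  show "finite_measure_subalgebra M (F s)"
    unfolding finite_measure_subalgebra_def finite_measure_subalgebra_axioms_def
    using assms prob_space.finite_measure unfolding is_filtration_def by blast
qed

lemma filt_meas:
  assumes "is_filtration M F" "f \<in> borel_measurable (F s)"
  shows "f \<in> borel_measurable M"
  using assms measurable_from_subalg unfolding is_filtration_def by blast

lemma mart_meas:
  assumes "is_filtration M F" "martingale_on M F t T X" "u \<in> {t..T}"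
  shows "X u \<in> borel_measurable M" "X u \<in> borel_measurable (F u)" "integrable M (X u)"
  using assms filt_meas unfolding martingale_on_def adapted_on_def by blast+

context prob_space begin

lemma mart_incr_orth:
  fixes X :: "real \<Rightarrow> 'a \<Rightarrow> real" and h :: "real \<Rightarrow> real"
  assumes filt: "is_filtration M F" and mart: "martingale_on M F t T X"
    and s: "t \<le> s" "s \<le> u" "u \<le> T"
    and h [measurable]: "h \<in> borel_measurable borel" and hb: "\<And>x. \<bar>h x\<bar> \<le> B"
  shows "integrable M (\<lambda>\<omega>. h (X s \<omega>) * (X u \<omega> - X s \<omega>))"
    "(\<integral>\<omega>. h (X s \<omega>) * (X u \<omega> - X s \<omega>) \<partial>M) = 0"
proof -
  interpret sfs: sigma_finite_subalgebra M "F s" using filt_sfs[OF prob_space_axioms filt] .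
  have [measurable]: "X s \<in> borel_measurable M" "X s \<in> borel_measurable (F s)" and intXs: "integrable M (X s)"
    using mart_meas[OF filt mart, of s] s by auto
  have [measurable]: "X u \<in> borel_measurable M" and intXu: "integrable M (X u)"
    using mart_meas[OF filt mart, of u] s by auto
  have fF [measurable]: "(\<lambda>\<omega>. h (X s \<omega>)) \<in> borel_measurable (F s)" by measurable
  have B: "0 \<le> B" using hb[of 0] by linarith
  have int1: "integrable M (\<lambda>\<omega>. h (X s \<omega>) * X u \<omega>)"
  proof (rule Bochner_Integration.integrable_bound[where f="\<lambda>\<omega>. B * X u \<omega>"])
    show "AE x in M. norm (h (X s x) * X u x) \<le> norm (B * X u x)"
      using hb B by (intro AE_I2) (simp add: abs_mult mult_right_mono)
  qed (use intXu in auto)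
  have int2: "integrable M (\<lambda>\<omega>. h (X s \<omega>) * X s \<omega>)"
  proof (rule Bochner_Integration.integrable_bound[where f="\<lambda>\<omega>. B * X s \<omega>"])
    show "AE x in M. norm (h (X s x) * X s x) \<le> norm (B * X s x)"
      using hb B by (intro AE_I2) (simp add: abs_mult mult_right_mono)
  qed (use intXs in auto)
  have ce: "AE \<omega> in M. real_cond_exp M (F s) (X u) \<omega> = X s \<omega>"
    using mart s unfolding martingale_on_def by auto
  have "(\<integral>\<omega>. h (X s \<omega>) * X u \<omega> \<partial>M) = (\<integral>\<omega>. h (X s \<omega>) * real_cond_exp M (F s) (X u) \<omega> \<partial>M)"
    using sfs.real_cond_exp_intg(2)[OF int1 fF] by simp
  also have "\<dots> = (\<integral>\<omega>. h (X s \<omega>) * X s \<omega> \<partial>M)"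
  proof (rule integral_cong_AE)
    show "AE x in M. h (X s x) * real_cond_exp M (F s) (X u) x = h (X s x) * X s x"
      using ce by (rule AE_mp) (auto intro!: AE_I2)
  qed measurable
  finally have eq: "(\<integral>\<omega>. h (X s \<omega>) * X u \<omega> \<partial>M) = (\<integral>\<omega>. h (X s \<omega>) * X s \<omega> \<partial>M)" .
  show "integrable M (\<lambda>\<omega>. h (X s \<omega>) * (X u \<omega> - X s \<omega>))"
    using Bochner_Integration.integrable_diff[OF int1 int2] by (simp add: right_diff_distrib)
  have "(\<integral>\<omega>. h (X s \<omega>) * (X u \<omega> - X s \<omega>) \<partial>M) = (\<integral>\<omega>. h (X s \<omega>) * X u \<omega> - h (X s \<omega>) * X s \<omega> \<partial>M)"
    by (simp add: right_diff_distrib)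
  also have "\<dots> = 0" using Bochner_Integration.integral_diff[OF int1 int2] eq by simp
  finally show "(\<integral>\<omega>. h (X s \<omega>) * (X u \<omega> - X s \<omega>) \<partial>M) = 0" .
qed

end

context prob_space begin

lemma mart_qv_tight:
  fixes X :: "real \<Rightarrow> 'a \<Rightarrow> real"
  assumes filt: "is_filtration M F" and mart: "martingale_on M F t T X"
    and P: "partition_seq t T p N"
    and bd: "AE \<omega> in M. \<exists>B. \<forall>u\<in>{t..T}. \<bar>X u \<omega>\<bar> \<le> B"
  shows "tightP M (\<lambda>n \<omega>. \<Sum>k<N n. (X (p n (Suc k)) \<omega> - X (p n k) \<omega>)^2)"
proof -
  have pin: "p n k \<in> {t..T}" if "k \<le> N n" for n k
    using partition_in[OF P that] by auto
  have measX: "X (p n k) \<in> borel_measurable M" if "k \<le> N n" for n k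
    using mart_meas(1)[OF filt mart pin[OF that]] .
  have intX: "integrable M (X (p n k))" if "k \<le> N n" for n k
    using mart_meas(3)[OF filt mart pin[OF that]] .
  have pt: "p n 0 = t" "p n (N n) = T" for n using P unfolding partition_seq_def by auto
  have tT: "t \<in> {t..T}" "T \<in> {t..T}" using pin[of 0 0] pt[of 0] by auto
  define Q where "Q n \<omega> = (\<Sum>k<N n. (X (p n (Suc k)) \<omega> - X (p n k) \<omega>)^2)" for n \<omega>
  have measQ [measurable]: "Q n \<in> borel_measurable M" for n
    unfolding Q_def
  proof (intro borel_measurable_sum)
    fix k assume "k \<in> {..<N n}"
    then have [measurable]: "X (p n (Suc k)) \<in> borel_measurable M" "X (p n k) \<in> borel_measurable M"
      using measX by auto
    show "(\<lambda>\<omega>. (X (p n (Suc k)) \<omega> - X (p n k) \<omega>)^2) \<in> borel_measurable M" by measurable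
  qed
  show ?thesis unfolding Q_def[symmetric] tightP_def
  proof (intro allI impI)
    fix e :: real assume e: "0 < e"
    define G where "G c = (\<Union>n. \<Union>k\<in>{..N n}. {\<omega>\<in>space M. c < \<bar>X (p n k) \<omega>\<bar>})" for c :: real
    have Gm: "G c \<in> events" for c
      unfolding G_def
    proof (intro sets.countable_UN sets.finite_UN subsetI)
      fix A assume "A \<in> range (\<lambda>n. \<Union>k\<in>{..N n}. {\<omega>\<in>space M. c < \<bar>X (p n k) \<omega>\<bar>})"
      then obtain n where A: "A = (\<Union>k\<in>{..N n}. {\<omega>\<in>space M. c < \<bar>X (p n k) \<omega>\<bar>})" by auto
      have "{\<omega>\<in>space M. c < \<bar>X (p n k) \<omega>\<bar>} \<in> events" if "k \<in> {..N n}" for k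
      proof -
        have [measurable]: "X (p n k) \<in> borel_measurable M" using measX that by auto
        show ?thesis by measurable
      qed
      then show "A \<in> events" unfolding A by (intro sets.finite_UN) auto
    qed
    have "(\<lambda>c. prob (G (real c))) \<longlonglongrightarrow> 0"
    proof (rule measure_tendsto_0_AE[OF Gm])
      show "AE \<omega> in M. eventually (\<lambda>c. \<omega> \<notin> G (real c)) sequentially"
        using bd
      proof (rule AE_mp, intro AE_I2 impI)
        fix \<omega> assume "\<exists>B. \<forall>u\<in>{t..T}. \<bar>X u \<omega>\<bar> \<le> B"
        then obtain B where B: "\<And>u. u \<in> {t..T} \<Longrightarrow> \<bar>X u \<omega>\<bar> \<le> B" by blast
        obtain c0 :: nat where "B \<le> real c0" using real_arch_simple by blast
        then show "eventually (\<lambda>c. \<omega> \<notin> G (real c)) sequentially"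
          unfolding eventually_sequentially G_def
          by (intro exI[of _ c0]) (smt (verit, best) B pin atMost_iff UN_iff mem_Collect_eq of_nat_mono)
      qed
    qed
    then have "eventually (\<lambda>c. prob (G (real c)) < e/2) sequentially"
      using e by (intro order_tendstoD) auto
    then obtain c0 :: nat where c0: "prob (G (real c0)) < e/2" by (auto simp: eventually_sequentially)
    define c where "c = real c0"
    have c: "0 \<le> c" unfolding c_def by simp
    define K where "K = 2 * c * (\<integral>\<omega>. \<bar>X T \<omega>\<bar> \<partial>M)"
    have K: "0 \<le> K" unfolding K_def using c by simp
    define R where "R n \<omega> = (\<Sum>k<N n. huber c (X (p n (Suc k)) \<omega>) - huber c (X (p n k) \<omega>)
        - huberd c (X (p n k) \<omega>) * (X (p n (Suc k)) \<omega> - X (p n k) \<omega>))" for n \<omega>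
    have Rnn: "0 \<le> R n \<omega>" for n \<omega>
      unfolding R_def by (intro sum_nonneg) (use huber_convex[OF c] in auto)
    have hd_meas: "(\<lambda>x. huberd c x) \<in> borel_measurable borel"
      using huberd_measurable[of "\<lambda>x. x" borel c] by simp
    have inth: "integrable M (\<lambda>\<omega>. huber c (X (p n k) \<omega>))" if "k \<le> N n" for n k
    proof (rule Bochner_Integration.integrable_bound[where f="\<lambda>\<omega>. 2 * c * X (p n k) \<omega>"])
      have [measurable]: "X (p n k) \<in> borel_measurable M" using measX that by auto
      show "(\<lambda>\<omega>. huber c (X (p n k) \<omega>)) \<in> borel_measurable M" by measurable
      show "integrable M (\<lambda>\<omega>. 2 * c * X (p n k) \<omega>)" using intX[OF that] by simp
      show "AE x in M. norm (huber c (X (p n k) x)) \<le> norm (2 * c * X (p n k) x)"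
        using huber_le[OF c] huber_nonneg[OF c] c by (intro AE_I2) (simp add: abs_mult)
    qed
    have intd: "integrable M (\<lambda>\<omega>. huberd c (X (p n k) \<omega>) * (X (p n (Suc k)) \<omega> - X (p n k) \<omega>))"
      and int0: "(\<integral>\<omega>. huberd c (X (p n k) \<omega>) * (X (p n (Suc k)) \<omega> - X (p n k) \<omega>) \<partial>M) = 0"
      if "k < N n" for n k
    proof -
      have "p n k \<le> p n (Suc k)" using partition_mono[OF P, of k "Suc k" n] that by simp
      moreover have "t \<le> p n k" "p n (Suc k) \<le> T" using pin[of k n] pin[of "Suc k" n] that by auto
      ultimately show "integrable M (\<lambda>\<omega>. huberd c (X (p n k) \<omega>) * (X (p n (Suc k)) \<omega> - X (p n k) \<omega>))"
        "(\<integral>\<omega>. huberd c (X (p n k) \<omega>) * (X (p n (Suc k)) \<omega> - X (p n k) \<omega>) \<partial>M) = 0"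
        using mart_incr_orth[OF filt mart _ _ _ hd_meas huberd_bound[OF c]] by auto
    qed
    have intR: "integrable M (R n)" for n
      unfolding R_def
      by (intro Bochner_Integration.integrable_sum Bochner_Integration.integrable_diff inth intd) auto
    have ER: "(\<integral>\<omega>. R n \<omega> \<partial>M) \<le> K" for n
    proof -
      have "(\<integral>\<omega>. R n \<omega> \<partial>M) = (\<Sum>k<N n. (\<integral>\<omega>. huber c (X (p n (Suc k)) \<omega>) \<partial>M) - (\<integral>\<omega>. huber c (X (p n k) \<omega>) \<partial>M)
        - (\<integral>\<omega>. huberd c (X (p n k) \<omega>) * (X (p n (Suc k)) \<omega> - X (p n k) \<omega>) \<partial>M))"
        unfolding R_def
        by (subst Bochner_Integration.integral_sum)
           (auto intro!: sum.cong Bochner_Integration.integrable_diff inth intd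
                 simp: Bochner_Integration.integral_diff[OF Bochner_Integration.integrable_diff] 
                       Bochner_Integration.integral_diff inth intd)
      also have "\<dots> = (\<Sum>k<N n. (\<integral>\<omega>. huber c (X (p n (Suc k)) \<omega>) \<partial>M) - (\<integral>\<omega>. huber c (X (p n k) \<omega>) \<partial>M))"
        by (intro sum.cong) (auto simp: int0)
      also have "\<dots> = (\<integral>\<omega>. huber c (X T \<omega>) \<partial>M) - (\<integral>\<omega>. huber c (X t \<omega>) \<partial>M)"
        by (subst sum_lessThan_telescope) (simp add: pt)
      also have "\<dots> \<le> (\<integral>\<omega>. huber c (X T \<omega>) \<partial>M)"
        using huber_nonneg[OF c] by (simp add: integral_nonneg_AE)
      also have "\<dots> \<le> (\<integral>\<omega>. 2 * c * \<bar>X T \<omega>\<bar> \<partial>M)"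
      proof (rule integral_mono)
        show "integrable M (\<lambda>\<omega>. huber c (X T \<omega>))" using inth[of "N 0" 0] pt by simp
        show "integrable M (\<lambda>\<omega>. 2 * c * \<bar>X T \<omega>\<bar>)" using intX[of "N 0" 0] pt by simp
      qed (use huber_le[OF c] in auto)
      also have "\<dots> = K" unfolding K_def by simp
      finally show ?thesis .
    qed
    define L where "L = 2 * K / e + 1"
    have L: "0 < L" unfolding L_def using divide_nonneg_pos[of "2*K" e] K e by linarith
    show "\<exists>L. \<forall>n. prob {\<omega> \<in> space M. L < \<bar>Q n \<omega>\<bar>} \<le> e"
    proof (intro exI[of _ L] allI)
      fix n
      have measR [measurable]: "R n \<in> borel_measurable M" using intR[of n] by auto
      have mk: "prob {\<omega>\<in>space M. L \<le> R n \<omega>} \<le> (\<integral>\<omega>. R n \<omega> \<partial>M) / L"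
        by (rule integral_Markov_inequality_measure[OF intR _ _ L, of "space M"]) (auto simp: Rnn)
      also have "\<dots> \<le> K / L" using ER[of n] L by (simp add: divide_right_mono)
      also have "\<dots> \<le> e / 2"
      proof -
        have "K \<le> e / 2 * L" unfolding L_def using e by (simp add: field_simps)
        then show ?thesis using L by (simp add: divide_le_eq)
      qed
      finally have mk: "prob {\<omega>\<in>space M. L \<le> R n \<omega>} \<le> e / 2" .
      have "prob {\<omega> \<in> space M. L < \<bar>Q n \<omega>\<bar>} \<le> prob (G c) + prob {\<omega>\<in>space M. L \<le> R n \<omega>}"
      proof (rule measure_le_AE_Un)
        show "AE \<omega> in M. \<omega> \<in> {\<omega> \<in> space M. L < \<bar>Q n \<omega>\<bar>} \<longrightarrow> \<omega> \<in> G c \<or> \<omega> \<in> {\<omega>\<in>space M. L \<le> R n \<omega>}"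
        proof (intro AE_I2 impI)
          fix \<omega> assume \<omega>: "\<omega> \<in> space M" "\<omega> \<in> {\<omega> \<in> space M. L < \<bar>Q n \<omega>\<bar>}"
          show "\<omega> \<in> G c \<or> \<omega> \<in> {\<omega>\<in>space M. L \<le> R n \<omega>}"
          proof (cases "\<omega> \<in> G c")
            case False
            then have b: "\<bar>X (p n k) \<omega>\<bar> \<le> c" if "k \<le> N n" for k
              using that \<omega> unfolding G_def by (auto simp: not_less)
            have "R n \<omega> = Q n \<omega>"
              unfolding R_def Q_def by (intro sum.cong refl huber_in b) auto
            moreover have "0 \<le> Q n \<omega>" unfolding Q_def by (intro sum_nonneg) auto
            ultimately show ?thesis using \<omega> by auto
          qed simp
        qed
      qed (use Gm in measurable)
      then show "prob {\<omega> \<in> space M. L < \<bar>Q n \<omega>\<bar>} \<le> e" using c0 mk unfolding c_def by linarith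
    qed
  qed
qed

end

lemma cont_bounded:
  fixes f :: "real \<Rightarrow> real"
  assumes "continuous_on {t..T} f"
  shows "\<exists>B. \<forall>u\<in>{t..T}. \<bar>f u\<bar> \<le> B"
proof -
  have "bounded (f ` {t..T})" by (rule compact_imp_bounded[OF compact_continuous_image[OF assms]]) simp
  then show ?thesis unfolding bounded_iff by auto
qed

lemma sum_sq_le_sq_sum:
  fixes a :: "nat \<Rightarrow> real"
  shows "(\<Sum>k<n. (a k)^2) \<le> (\<Sum>k<n. \<bar>a k\<bar>)^2"
proof -
  define s where "s = (\<Sum>k<n. \<bar>a k\<bar>)"
  have "\<bar>a k\<bar> \<le> s" if "k < n" for k
    unfolding s_def using that by (intro member_le_sum) auto
  then have "(a k)^2 \<le> \<bar>a k\<bar> * s" if "k < n" for k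
    using that mult_left_mono[of "\<bar>a k\<bar>" s "\<bar>a k\<bar>"] by (simp add: power2_eq_square abs_mult[symmetric])
  then have "(\<Sum>k<n. (a k)^2) \<le> (\<Sum>k<n. \<bar>a k\<bar> * s)" by (intro sum_mono) auto
  also have "\<dots> = s^2" by (simp add: s_def sum_distrib_right power2_eq_square)
  finally show ?thesis by (simp add: s_def)
qed

lemma stopping_time_meas:
  assumes "is_filtration M F" "stopping_time F \<tau>"
  shows "\<tau> \<in> borel_measurable M"
proof (rule borel_measurable_iff_le[THEN iffD2], intro allI)
  fix s :: real
  have sub: "subalgebra M (F s)" using assms(1) unfolding is_filtration_def by auto
  have "{x\<in>space (F s). \<tau> x \<le> s} \<in> sets (F s)"
    using assms(2) unfolding stopping_time_def by (auto dest: spec[of _ s])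
  then show "{w \<in> space M. \<tau> w \<le> s} \<in> sets M"
    using sub unfolding subalgebra_def by auto
qed

context prob_space begin

lemma tightP_cmult:
  assumes [measurable]: "\<And>n. Z n \<in> borel_measurable M" and tZ: "tightP M Z"
  shows "tightP M (\<lambda>n \<omega>. c * Z n \<omega>)"
proof (rule tightP_mult[where U="\<lambda>n \<omega>. c" and V=Z])
  show "tightP M (\<lambda>n \<omega>. c)" by (rule tightP_pathwise) auto
qed (use tZ in \<open>auto simp: abs_mult\<close>)

lemma lmart_qv_tight:
  fixes X :: "real \<Rightarrow> 'a \<Rightarrow> real"
  assumes filt: "is_filtration M F" and lm: "cont_local_martingale_on M F t T X"
    and P: "partition_seq t T p N"
  shows "tightP M (\<lambda>n \<omega>. \<Sum>k<N n. (X (p n (Suc k)) \<omega> - X (p n k) \<omega>)^2)"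
proof -
  obtain \<tau> :: "nat \<Rightarrow> 'a \<Rightarrow> real" where st: "\<And>n. stopping_time F (\<tau> n)"
    and aeT: "AE \<omega> in M. (\<forall>n. \<tau> n \<omega> \<le> \<tau> (Suc n) \<omega>) \<and> (\<exists>n. T \<le> \<tau> n \<omega>)"
    and mt: "\<And>n. martingale_on M F t T (\<lambda>u \<omega>. X (max t (min u (\<tau> n \<omega>))) \<omega>)"
    using lm unfolding cont_local_martingale_on_def by blast
  have adX: "adapted_on F t T X" and ctX: "continuous_paths_on M t T X"
    using lm unfolding cont_local_martingale_on_def by auto
  have pin: "p n k \<in> {t..T}" if "k \<le> N n" for n k
    using partition_in[OF P that] by auto
  have measX: "X (p n k) \<in> borel_measurable M" if "k \<le> N n" for n k
    using adX pin[OF that] filt_meas[OF filt] unfolding adapted_on_def by blast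
  define Y where "Y m u \<omega> = X (max t (min u (\<tau> m \<omega>))) \<omega>" for m u \<omega>
  have measY: "Y m (p n k) \<in> borel_measurable M" if "k \<le> N n" for m n k
    using mart_meas(1)[OF filt mt pin[OF that]] unfolding Y_def .
  define Q where "Q n \<omega> = (\<Sum>k<N n. (X (p n (Suc k)) \<omega> - X (p n k) \<omega>)^2)" for n \<omega>
  define QY where "QY m n \<omega> = (\<Sum>k<N n. (Y m (p n (Suc k)) \<omega> - Y m (p n k) \<omega>)^2)" for m n \<omega>
  have measQ [measurable]: "Q n \<in> borel_measurable M" for n
    unfolding Q_def
  proof (intro borel_measurable_sum)
    fix k assume "k \<in> {..<N n}"
    then have [measurable]: "X (p n (Suc k)) \<in> borel_measurable M" "X (p n k) \<in> borel_measurable M"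
      using measX by auto
    show "(\<lambda>\<omega>. (X (p n (Suc k)) \<omega> - X (p n k) \<omega>)^2) \<in> borel_measurable M" by measurable
  qed
  have measQY [measurable]: "QY m n \<in> borel_measurable M" for m n
    unfolding QY_def
  proof (intro borel_measurable_sum)
    fix k assume "k \<in> {..<N n}"
    then have [measurable]: "Y m (p n (Suc k)) \<in> borel_measurable M" "Y m (p n k) \<in> borel_measurable M"
      using measY by auto
    show "(\<lambda>\<omega>. (Y m (p n (Suc k)) \<omega> - Y m (p n k) \<omega>)^2) \<in> borel_measurable M" by measurable
  qed
  have tY: "tightP M (QY m)" for m
    unfolding QY_def
  proof (rule mart_qv_tight[OF filt _ P])
    show "martingale_on M F t T (Y m)" using mt[of m] unfolding Y_def .
    show "AE \<omega> in M. \<exists>B. \<forall>u\<in>{t..T}. \<bar>Y m u \<omega>\<bar> \<le> B"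
      using ctX unfolding continuous_paths_on_def
    proof (rule AE_mp, intro AE_I2 impI)
      fix \<omega> assume "continuous_on {t..T} (\<lambda>u. X u \<omega>)"
      then obtain B where B: "\<And>u. u \<in> {t..T} \<Longrightarrow> \<bar>X u \<omega>\<bar> \<le> B" using cont_bounded by blast
      have "\<bar>Y m u \<omega>\<bar> \<le> B" if "u \<in> {t..T}" for u
        unfolding Y_def using that by (intro B) auto
      then show "\<exists>B. \<forall>u\<in>{t..T}. \<bar>Y m u \<omega>\<bar> \<le> B" by blast
    qed
  qed
  have measH: "{\<omega>\<in>space M. \<tau> m \<omega> < T} \<in> events" for m
    using stopping_time_meas[OF filt st, of m] unfolding borel_measurable_iff_less by blast
  show ?thesis unfolding Q_def[symmetric] tightP_def
  proof (intro allI impI)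
    fix e :: real assume e: "0 < e"
    have "(\<lambda>m. prob {\<omega>\<in>space M. \<tau> m \<omega> < T}) \<longlonglongrightarrow> 0"
    proof (rule measure_tendsto_0_AE[OF measH])
      show "AE \<omega> in M. eventually (\<lambda>m. \<omega> \<notin> {\<omega>\<in>space M. \<tau> m \<omega> < T}) sequentially"
        using aeT
      proof (rule AE_mp, intro AE_I2 impI)
        fix \<omega> assume h: "(\<forall>n. \<tau> n \<omega> \<le> \<tau> (Suc n) \<omega>) \<and> (\<exists>n. T \<le> \<tau> n \<omega>)"
        then obtain n0 where n0: "T \<le> \<tau> n0 \<omega>" by blast
        have mono: "\<And>n. \<tau> n \<omega> \<le> \<tau> (Suc n) \<omega>" using h by blast
        have "\<tau> n0 \<omega> \<le> \<tau> m \<omega>" if "n0 \<le> m" for m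
          using lift_Suc_mono_le[of "\<lambda>n. \<tau> n \<omega>", OF mono that] by simp
        then have "\<not> \<tau> m \<omega> < T" if "n0 \<le> m" for m using n0 that by (meson order_trans not_less)
        then show "eventually (\<lambda>m. \<omega> \<notin> {\<omega>\<in>space M. \<tau> m \<omega> < T}) sequentially"
          unfolding eventually_sequentially by blast
      qed
    qed
    then have "eventually (\<lambda>m. prob {\<omega>\<in>space M. \<tau> m \<omega> < T} < e/2) sequentially"
      using e by (intro order_tendstoD) auto
    then obtain m where m: "prob {\<omega>\<in>space M. \<tau> m \<omega> < T} < e/2" by (auto simp: eventually_sequentially)
    obtain L where L: "\<And>n. prob {\<omega>\<in>space M. L < \<bar>QY m n \<omega>\<bar>} \<le> e/2"
      using tY[of m] e unfolding tightP_def by (meson half_gt_zero)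
    show "\<exists>L. \<forall>n. prob {\<omega> \<in> space M. L < \<bar>Q n \<omega>\<bar>} \<le> e"
    proof (intro exI[of _ L] allI)
      fix n
      have "prob {\<omega> \<in> space M. L < \<bar>Q n \<omega>\<bar>} \<le> prob {\<omega>\<in>space M. \<tau> m \<omega> < T} + prob {\<omega>\<in>space M. L < \<bar>QY m n \<omega>\<bar>}"
      proof (rule measure_le_AE_Un)
        show "AE \<omega> in M. \<omega> \<in> {\<omega> \<in> space M. L < \<bar>Q n \<omega>\<bar>} \<longrightarrow> \<omega> \<in> {\<omega>\<in>space M. \<tau> m \<omega> < T} \<or> \<omega> \<in> {\<omega>\<in>space M. L < \<bar>QY m n \<omega>\<bar>}"
        proof (intro AE_I2 impI)
          fix \<omega> assume \<omega>: "\<omega> \<in> space M" "\<omega> \<in> {\<omega> \<in> space M. L < \<bar>Q n \<omega>\<bar>}"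
          show "\<omega> \<in> {\<omega>\<in>space M. \<tau> m \<omega> < T} \<or> \<omega> \<in> {\<omega>\<in>space M. L < \<bar>QY m n \<omega>\<bar>}"
          proof (cases "\<tau> m \<omega> < T")
            case False
            have "Y m (p n k) \<omega> = X (p n k) \<omega>" if "k \<le> N n" for k
              using pin[OF that] False unfolding Y_def by (simp add: max_def min_def)
            then have "QY m n \<omega> = Q n \<omega>" unfolding QY_def Q_def by (intro sum.cong) auto
            then show ?thesis using \<omega> by auto
          next
            case True then show ?thesis using \<omega>(1) by blast
          qed
        qed
        show "{\<omega>\<in>space M. L < \<bar>Q n \<omega>\<bar>} \<in> events" by measurable
        show "{\<omega>\<in>space M. \<tau> m \<omega> < T} \<in> events" by (rule measH)
        show "{\<omega>\<in>space M. L < \<bar>QY m n \<omega>\<bar>} \<in> events" by measurable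
      qed
      then show "prob {\<omega> \<in> space M. L < \<bar>Q n \<omega>\<bar>} \<le> e" using m L[of n] by linarith
    qed
  qed
qed

lemma semimart_qv_tight:
  fixes S :: "real \<Rightarrow> 'a \<Rightarrow> real"
  assumes filt: "is_filtration M F" and sm: "cont_semimartingale_on M F t T S"
    and P: "partition_seq t T p N"
  shows "tightP M (\<lambda>n \<omega>. \<Sum>k<N n. (S (p n (Suc k)) \<omega> - S (p n k) \<omega>)^2)"
proof -
  obtain X A where lm: "cont_local_martingale_on M F t T X" and adA: "adapted_on F t T A"
    and bv: "AE \<omega> in M. bounded_variation_on t T (\<lambda>u. A u \<omega>)"
    and dec: "AE \<omega> in M. X t \<omega> = 0 \<and> A t \<omega> = 0 \<and> (\<forall>u\<in>{t..T}. S u \<omega> = S t \<omega> + X u \<omega> + A u \<omega>)"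
    using sm unfolding cont_semimartingale_on_def by blast
  have adS: "adapted_on F t T S" using sm unfolding cont_semimartingale_on_def by blast
  have adX: "adapted_on F t T X" using lm unfolding cont_local_martingale_on_def by blast
  have pin: "p n k \<in> {t..T}" if "k \<le> N n" for n k
    using partition_in[OF P that] by auto
  have pt: "p n 0 = t" "p n (N n) = T" for n using P unfolding partition_seq_def by auto
  have meas: "Z (p n k) \<in> borel_measurable M" if "adapted_on F t T Z" "k \<le> N n" for Z n k
    using that(1) pin[OF that(2)] filt_meas[OF filt] unfolding adapted_on_def by blast
  have measQ: "(\<lambda>\<omega>. \<Sum>k<N n. (Z (p n (Suc k)) \<omega> - Z (p n k) \<omega>)^2) \<in> borel_measurable M"
    if "adapted_on F t T Z" for Z n
  proof (intro borel_measurable_sum)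
    fix k assume "k \<in> {..<N n}"
    then have [measurable]: "Z (p n (Suc k)) \<in> borel_measurable M" "Z (p n k) \<in> borel_measurable M"
      using meas[OF that] by auto
    show "(\<lambda>\<omega>. (Z (p n (Suc k)) \<omega> - Z (p n k) \<omega>)^2) \<in> borel_measurable M" by measurable
  qed
  have tX: "tightP M (\<lambda>n \<omega>. 2 * (\<Sum>k<N n. (X (p n (Suc k)) \<omega> - X (p n k) \<omega>)^2))"
    by (rule tightP_cmult[OF measQ[OF adX] lmart_qv_tight[OF filt lm P]])
  have tA: "tightP M (\<lambda>n \<omega>. 2 * (\<Sum>k<N n. (A (p n (Suc k)) \<omega> - A (p n k) \<omega>)^2))"
  proof (rule tightP_pathwise)
    show "AE \<omega> in M. \<exists>B. \<forall>n. \<bar>2 * (\<Sum>k<N n. (A (p n (Suc k)) \<omega> - A (p n k) \<omega>)^2)\<bar> \<le> B"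
      using bv
    proof (rule AE_mp, intro AE_I2 impI)
      fix \<omega> assume "bounded_variation_on t T (\<lambda>u. A u \<omega>)"
      then obtain B where B: "\<And>n q. q 0 = t \<Longrightarrow> q n = T \<Longrightarrow> (\<forall>k<n. q k \<le> q (Suc k)) \<Longrightarrow>
          (\<Sum>k<n. \<bar>A (q (Suc k)) \<omega> - A (q k) \<omega>\<bar>) \<le> B"
        unfolding bounded_variation_on_def by blast
      have "\<bar>2 * (\<Sum>k<N n. (A (p n (Suc k)) \<omega> - A (p n k) \<omega>)^2)\<bar> \<le> 2 * B^2" for n
      proof -
        have v: "(\<Sum>k<N n. \<bar>A (p n (Suc k)) \<omega> - A (p n k) \<omega>\<bar>) \<le> B"
        proof (rule B[of "p n" "N n"])
          show "p n 0 = t" "p n (N n) = T" using pt by auto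
          show "\<forall>k<N n. p n k \<le> p n (Suc k)" using P unfolding partition_seq_def by (auto intro: less_imp_le)
        qed
        have "(\<Sum>k<N n. (A (p n (Suc k)) \<omega> - A (p n k) \<omega>)^2) \<le> (\<Sum>k<N n. \<bar>A (p n (Suc k)) \<omega> - A (p n k) \<omega>\<bar>)^2"
          by (rule sum_sq_le_sq_sum)
        also have "\<dots> \<le> B^2" using v by (intro power_mono) (auto intro: sum_nonneg)
        finally show ?thesis by (simp add: sum_nonneg)
      qed
      then show "\<exists>B. \<forall>n. \<bar>2 * (\<Sum>k<N n. (A (p n (Suc k)) \<omega> - A (p n k) \<omega>)^2)\<bar> \<le> B" by blast
    qed
  qed (use measQ[OF adA] in auto)
  show ?thesis
  proof (rule tightP_add[OF _ _ _ tX tA])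
    fix n
    show "AE \<omega> in M. \<bar>\<Sum>k<N n. (S (p n (Suc k)) \<omega> - S (p n k) \<omega>)^2\<bar>
      \<le> \<bar>2 * (\<Sum>k<N n. (X (p n (Suc k)) \<omega> - X (p n k) \<omega>)^2)\<bar> + \<bar>2 * (\<Sum>k<N n. (A (p n (Suc k)) \<omega> - A (p n k) \<omega>)^2)\<bar>"
      using dec
    proof (rule AE_mp, intro AE_I2 impI)
      fix \<omega> assume d: "X t \<omega> = 0 \<and> A t \<omega> = 0 \<and> (\<forall>u\<in>{t..T}. S u \<omega> = S t \<omega> + X u \<omega> + A u \<omega>)"
      have sq: "(S (p n (Suc k)) \<omega> - S (p n k) \<omega>)^2 \<le> 2 * (X (p n (Suc k)) \<omega> - X (p n k) \<omega>)^2 + 2 * (A (p n (Suc k)) \<omega> - A (p n k) \<omega>)^2"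
        if "k < N n" for k
      proof -
        have "S (p n (Suc k)) \<omega> - S (p n k) \<omega> = (X (p n (Suc k)) \<omega> - X (p n k) \<omega>) + (A (p n (Suc k)) \<omega> - A (p n k) \<omega>)"
        proof -
          have "S (p n (Suc k)) \<omega> = S t \<omega> + X (p n (Suc k)) \<omega> + A (p n (Suc k)) \<omega>"
          proof -
            have "p n (Suc k) \<in> {t..T}" using pin[of "Suc k" n] that by simp
            then show ?thesis using d by blast
          qed
          moreover have "S (p n k) \<omega> = S t \<omega> + X (p n k) \<omega> + A (p n k) \<omega>"
          proof -
            have "p n k \<in> {t..T}" using pin[of k n] that by simp
            then show ?thesis using d by blast
          qed
          ultimately show ?thesis by simp
        qed
        moreover have "(a + b)^2 \<le> 2 * a^2 + 2 * b^2" for a b :: real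
          using sum_squares_ge_zero[of "a - b" 0] by (simp add: power2_eq_square algebra_simps)
        ultimately show ?thesis by simp
      qed
      then have "(\<Sum>k<N n. (S (p n (Suc k)) \<omega> - S (p n k) \<omega>)^2) \<le> 2 * (\<Sum>k<N n. (X (p n (Suc k)) \<omega> - X (p n k) \<omega>)^2) + 2 * (\<Sum>k<N n. (A (p n (Suc k)) \<omega> - A (p n k) \<omega>)^2)"
      proof -
        have "(\<Sum>k<N n. (S (p n (Suc k)) \<omega> - S (p n k) \<omega>)^2) \<le> (\<Sum>k<N n. 2 * (X (p n (Suc k)) \<omega> - X (p n k) \<omega>)^2 + 2 * (A (p n (Suc k)) \<omega> - A (p n k) \<omega>)^2)"
          by (rule sum_mono) (use sq in auto)
        also have "\<dots> = 2 * (\<Sum>k<N n. (X (p n (Suc k)) \<omega> - X (p n k) \<omega>)^2) + 2 * (\<Sum>k<N n. (A (p n (Suc k)) \<omega> - A (p n k) \<omega>)^2)"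
          by (simp only: sum.distrib sum_distrib_left)
        finally show ?thesis .
      qed
      then show "\<bar>\<Sum>k<N n. (S (p n (Suc k)) \<omega> - S (p n k) \<omega>)^2\<bar>
      \<le> \<bar>2 * (\<Sum>k<N n. (X (p n (Suc k)) \<omega> - X (p n k) \<omega>)^2)\<bar> + \<bar>2 * (\<Sum>k<N n. (A (p n (Suc k)) \<omega> - A (p n k) \<omega>)^2)\<bar>"
        by (simp add: sum_nonneg)
    qed
  qed (use measQ[OF adS] measQ[OF adX] measQ[OF adA] in auto)
qed

end

definition gfun :: "real \<Rightarrow> real" where "gfun r = ln (1 + r) - r + r^2/2"

lemma Max_insert0_eq:
  "Max (insert 0 (f ` {..<(n::nat)})) = Max ((\<lambda>k. if k < n then f k else (0::real)) ` {..n})"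
proof -
  have "(\<lambda>k. if k < n then f k else (0::real)) ` {..n} = insert 0 (f ` {..<n})"
  proof (intro equalityI subsetI)
    fix x assume "x \<in> (\<lambda>k. if k < n then f k else (0::real)) ` {..n}"
    then show "x \<in> insert 0 (f ` {..<n})" by (auto split: if_splits)
  next
    fix x assume "x \<in> insert 0 (f ` {..<n})"
    then show "x \<in> (\<lambda>k. if k < n then f k else (0::real)) ` {..n}"
    proof
      assume "x = 0" then show ?thesis by (intro image_eqI[of _ _ n]) simp_all
    next
      assume "x \<in> f ` {..<n}" then show ?thesis by (auto intro!: image_eqI)
    qed
  qed
  then show ?thesis by simp
qed

lemma borel_measurable_Max_insert0:
  assumes "\<And>k. f k \<in> borel_measurable M"
  shows "(\<lambda>\<omega>. Max (insert 0 ((\<lambda>k. f k \<omega>) ` {..<(n::nat)})) :: real) \<in> borel_measurable M"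
proof -
  have "(\<lambda>\<omega>. Max ((\<lambda>k. if k < n then f k \<omega> else (0::real)) ` {..n})) \<in> borel_measurable M"
    by (intro borel_measurable_Max) (use assms in auto)
  then show ?thesis by (subst Max_insert0_eq) simp
qed

lemma Max_insert0_ge: "k < (n::nat) \<Longrightarrow> f k \<le> Max (insert (0::real) (f ` {..<n}))"
  by (intro Max_ge) auto

lemma Max_insert0_nonneg: "0 \<le> Max (insert (0::real) (f ` {..<(n::nat)}))"
  by (intro Max_ge) auto

lemma Max_insert0_le: "(\<And>k. k < (n::nat) \<Longrightarrow> f k \<le> B) \<Longrightarrow> 0 \<le> B \<Longrightarrow> Max (insert (0::real) (f ` {..<n})) \<le> B"
  by (subst Max_le_iff) auto

context prob_space begin

lemma half_small:
  fixes Sa Sb :: "real \<Rightarrow> 'a \<Rightarrow> real"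
  assumes filt: "is_filtration M F" and P: "partition_seq t T p N" and pin: "\<And>n k. p n k \<in> {t..T}"
    and smb: "cont_semimartingale_on M F t T Sb" and ada: "adapted_on F t T Sa"
    and good: "AE \<omega> in M. (\<forall>u\<in>{t..T}. 0 < Sa u \<omega> \<and> 0 < Sb u \<omega>) \<and>
        continuous_on {t..T} (\<lambda>u. Sa u \<omega>) \<and> continuous_on {t..T} (\<lambda>u. Sb u \<omega>)"
  shows "conv_in_prob M (\<lambda>n \<omega>. \<Sum>k<N n. ln (Sa (p n k) \<omega>) *
      gfun ((Sb (p n (Suc k)) \<omega> - Sb (p n k) \<omega>) / Sb (p n k) \<omega>)) (\<lambda>_. 0)"
proof -
  have tT: "t \<le> T" using pin[of 0 0] by simp
  have adb: "adapted_on F t T Sb" using smb unfolding cont_semimartingale_on_def by blast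
  have [measurable]: "Sa (p n k) \<in> borel_measurable M" "Sb (p n k) \<in> borel_measurable M" for n k
    using ada adb pin[of n k] filt_meas[OF filt] unfolding adapted_on_def by blast+
  define r where "r n k \<omega> = (Sb (p n (Suc k)) \<omega> - Sb (p n k) \<omega>) / Sb (p n k) \<omega>" for n k \<omega>
  have [measurable]: "r n k \<in> borel_measurable M" for n k unfolding r_def by measurable
  define W where "W n \<omega> = Max (insert 0 ((\<lambda>k. \<bar>r n k \<omega>\<bar>) ` {..<N n}))" for n \<omega>
  define MY where "MY n \<omega> = Max (insert 0 ((\<lambda>k. \<bar>ln (Sa (p n k) \<omega>)\<bar>) ` {..<N n}))" for n \<omega>
  define IB where "IB n \<omega> = Max (insert 0 ((\<lambda>k. 1 / (Sb (p n k) \<omega>)^2) ` {..<N n}))" for n \<omega>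
  define SR where "SR n \<omega> = (\<Sum>k<N n. (r n k \<omega>)^2)" for n \<omega>
  define Q where "Q n \<omega> = (\<Sum>k<N n. (Sb (p n (Suc k)) \<omega> - Sb (p n k) \<omega>)^2)" for n \<omega>
  define U where "U n \<omega> = 2 * MY n \<omega> * SR n \<omega>" for n \<omega>
  have [measurable]: "W n \<in> borel_measurable M" for n
    unfolding W_def by (rule borel_measurable_Max_insert0) measurable
  have [measurable]: "MY n \<in> borel_measurable M" for n
    unfolding MY_def by (rule borel_measurable_Max_insert0) measurable
  have [measurable]: "IB n \<in> borel_measurable M" for n
    unfolding IB_def by (rule borel_measurable_Max_insert0) measurable
  have [measurable]: "SR n \<in> borel_measurable M" "Q n \<in> borel_measurable M" "U n \<in> borel_measurable M" for n
    unfolding SR_def Q_def U_def by measurable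
  have tQ: "tightP M Q" unfolding Q_def by (rule semimart_qv_tight[OF filt smb P])
  have tIB: "tightP M IB"
  proof (rule tightP_pathwise)
    show "AE \<omega> in M. \<exists>B. \<forall>n. \<bar>IB n \<omega>\<bar> \<le> B"
      using good
    proof (rule AE_mp, intro AE_I2 impI)
      fix \<omega> assume g: "(\<forall>u\<in>{t..T}. 0 < Sa u \<omega> \<and> 0 < Sb u \<omega>) \<and>
        continuous_on {t..T} (\<lambda>u. Sa u \<omega>) \<and> continuous_on {t..T} (\<lambda>u. Sb u \<omega>)"
      have "continuous_on {t..T} (\<lambda>u. 1 / (Sb u \<omega>)^2)"
        using g by (intro continuous_intros) auto
      then obtain B where B: "\<And>u. u \<in> {t..T} \<Longrightarrow> \<bar>1 / (Sb u \<omega>)^2\<bar> \<le> B" using cont_bounded by blast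
      have B0: "0 \<le> B" using B[of t] tT by (meson abs_ge_zero atLeastAtMost_iff order.refl order_trans)
      have "\<bar>IB n \<omega>\<bar> \<le> B" for n
        unfolding IB_def using Max_insert0_nonneg
        by (subst abs_of_nonneg) (auto intro!: Max_insert0_le B0 order_trans[OF abs_ge_self B] pin)
      then show "\<exists>B. \<forall>n. \<bar>IB n \<omega>\<bar> \<le> B" by blast
    qed
  qed measurable
  have tSR: "tightP M SR"
  proof (rule tightP_mult[OF _ _ _ tIB tQ])
    fix n
    show "AE \<omega> in M. \<bar>SR n \<omega>\<bar> \<le> \<bar>IB n \<omega>\<bar> * \<bar>Q n \<omega>\<bar>"
      using good
    proof (rule AE_mp, intro AE_I2 impI)
      fix \<omega> assume g: "(\<forall>u\<in>{t..T}. 0 < Sa u \<omega> \<and> 0 < Sb u \<omega>) \<and>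
        continuous_on {t..T} (\<lambda>u. Sa u \<omega>) \<and> continuous_on {t..T} (\<lambda>u. Sb u \<omega>)"
      have "(r n k \<omega>)^2 \<le> IB n \<omega> * (Sb (p n (Suc k)) \<omega> - Sb (p n k) \<omega>)^2" if "k < N n" for k
      proof -
        have "(r n k \<omega>)^2 = 1 / (Sb (p n k) \<omega>)^2 * (Sb (p n (Suc k)) \<omega> - Sb (p n k) \<omega>)^2"
          unfolding r_def by (simp add: power_divide)
        also have "\<dots> \<le> IB n \<omega> * (Sb (p n (Suc k)) \<omega> - Sb (p n k) \<omega>)^2"
          unfolding IB_def by (intro mult_right_mono Max_insert0_ge[OF that]) auto
        finally show ?thesis .
      qed
      then have "SR n \<omega> \<le> IB n \<omega> * Q n \<omega>"
        unfolding SR_def Q_def sum_distrib_left by (intro sum_mono) auto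
      moreover have "0 \<le> SR n \<omega>" unfolding SR_def by (simp add: sum_nonneg)
      moreover have "0 \<le> IB n \<omega>" unfolding IB_def by (rule Max_insert0_nonneg)
      moreover have "0 \<le> Q n \<omega>" unfolding Q_def by (simp add: sum_nonneg)
      ultimately show "\<bar>SR n \<omega>\<bar> \<le> \<bar>IB n \<omega>\<bar> * \<bar>Q n \<omega>\<bar>"
        by simp
    qed
  qed measurable
  have tMY: "tightP M (\<lambda>n \<omega>. 2 * MY n \<omega>)"
  proof (rule tightP_pathwise)
    show "AE \<omega> in M. \<exists>B. \<forall>n. \<bar>2 * MY n \<omega>\<bar> \<le> B"
      using good
    proof (rule AE_mp, intro AE_I2 impI)
      fix \<omega> assume g: "(\<forall>u\<in>{t..T}. 0 < Sa u \<omega> \<and> 0 < Sb u \<omega>) \<and>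
        continuous_on {t..T} (\<lambda>u. Sa u \<omega>) \<and> continuous_on {t..T} (\<lambda>u. Sb u \<omega>)"
      have "continuous_on {t..T} (\<lambda>u. ln (Sa u \<omega>))"
        using g by (intro continuous_intros) auto
      then obtain B where B: "\<And>u. u \<in> {t..T} \<Longrightarrow> \<bar>ln (Sa u \<omega>)\<bar> \<le> B" using cont_bounded by blast
      have B0: "0 \<le> B" using B[of t] tT by (meson abs_ge_zero atLeastAtMost_iff order.refl order_trans)
      have "\<bar>2 * MY n \<omega>\<bar> \<le> 2 * B" for n
        unfolding MY_def using Max_insert0_nonneg
        by (subst abs_of_nonneg) (auto intro!: Max_insert0_le B0 B pin)
      then show "\<exists>B. \<forall>n. \<bar>2 * MY n \<omega>\<bar> \<le> B" by blast
    qed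
  qed measurable
  have tU: "tightP M U"
    unfolding U_def by (rule tightP_mult[OF _ _ _ tMY tSR]) (auto simp: abs_mult intro!: AE_I2)
  have cW: "conv_in_prob M W (\<lambda>_. 0)"
  proof (rule AE_tendsto_conv_in_prob)
    show "AE \<omega> in M. (\<lambda>n. W n \<omega>) \<longlonglongrightarrow> 0"
      using good
    proof (rule AE_mp, intro AE_I2 impI)
      fix \<omega> assume g: "(\<forall>u\<in>{t..T}. 0 < Sa u \<omega> \<and> 0 < Sb u \<omega>) \<and>
        continuous_on {t..T} (\<lambda>u. Sa u \<omega>) \<and> continuous_on {t..T} (\<lambda>u. Sb u \<omega>)"
      have "continuous_on {t..T} (\<lambda>u. 1 / Sb u \<omega>)"
        using g by (intro continuous_intros) auto
      then obtain B where B: "\<And>u. u \<in> {t..T} \<Longrightarrow> \<bar>1 / Sb u \<omega>\<bar> \<le> B" using cont_bounded by blast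
      have B0: "0 \<le> B" using B[of t] tT by (meson abs_ge_zero atLeastAtMost_iff order.refl order_trans)
      define mi where "mi n = Max (insert 0 ((\<lambda>k. \<bar>Sb (p n (Suc k)) \<omega> - Sb (p n k) \<omega>\<bar>) ` {..<N n}))" for n
      have mi: "mi \<longlonglongrightarrow> 0" unfolding mi_def by (rule maxinc_tendsto[OF P]) (use g in auto)
      have le: "W n \<omega> \<le> mi n * B" for n
        unfolding W_def
      proof (rule Max_insert0_le)
        fix k assume k: "k < N n"
        have "\<bar>r n k \<omega>\<bar> = \<bar>Sb (p n (Suc k)) \<omega> - Sb (p n k) \<omega>\<bar> * \<bar>1 / Sb (p n k) \<omega>\<bar>"
          unfolding r_def by (simp add: abs_mult abs_divide)
        also have "\<dots> \<le> mi n * B"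
          unfolding mi_def by (intro mult_mono Max_insert0_ge[OF k] B pin Max_insert0_nonneg) auto
        finally show "\<bar>r n k \<omega>\<bar> \<le> mi n * B" .
      qed (use B0 Max_insert0_nonneg mi_def in auto)
      show "(\<lambda>n. W n \<omega>) \<longlonglongrightarrow> 0"
      proof (rule tendsto_sandwich[where f="\<lambda>_. 0" and h="\<lambda>n. mi n * B"])
        show "\<forall>\<^sub>F n in sequentially. 0 \<le> W n \<omega>" unfolding W_def by (simp add: Max_insert0_nonneg)
        show "\<forall>\<^sub>F n in sequentially. W n \<omega> \<le> mi n * B" using le by simp
        show "(\<lambda>n. mi n * B) \<longlonglongrightarrow> 0" using tendsto_mult[OF mi tendsto_const[of B]] by simp
      qed simp
    qed
  qed measurable
  show ?thesis
  proof (rule conv_small[OF _ _ _ tU cW])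
    fix n
    show "AE \<omega> in M. \<bar>W n \<omega>\<bar> \<le> 1/2 \<longrightarrow> \<bar>\<Sum>k<N n. ln (Sa (p n k) \<omega>) *
      gfun ((Sb (p n (Suc k)) \<omega> - Sb (p n k) \<omega>) / Sb (p n k) \<omega>)\<bar> \<le> \<bar>U n \<omega>\<bar> * \<bar>W n \<omega>\<bar>"
    proof (intro AE_I2 impI)
      fix \<omega> assume w: "\<bar>W n \<omega>\<bar> \<le> 1/2"
      have W0: "0 \<le> W n \<omega>" unfolding W_def by (simp add: Max_insert0_nonneg)
      have MY0: "0 \<le> MY n \<omega>" unfolding MY_def by (simp add: Max_insert0_nonneg)
      have trm: "\<bar>ln (Sa (p n k) \<omega>) * gfun (r n k \<omega>)\<bar> \<le> 2 * MY n \<omega> * W n \<omega> * (r n k \<omega>)^2"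
        if k: "k < N n" for k
      proof -
        have rk: "\<bar>r n k \<omega>\<bar> \<le> W n \<omega>" unfolding W_def by (rule Max_insert0_ge[OF k])
        have yk: "\<bar>ln (Sa (p n k) \<omega>)\<bar> \<le> MY n \<omega>" unfolding MY_def by (rule Max_insert0_ge[OF k])
        have "\<bar>gfun (r n k \<omega>)\<bar> \<le> 2 * \<bar>r n k \<omega>\<bar>^3"
          unfolding gfun_def by (rule ln_taylor3) (use rk w in auto)
        also have "\<dots> = 2 * \<bar>r n k \<omega>\<bar> * (r n k \<omega>)^2" by (simp add: power3_eq_cube power2_eq_square)
        also have "\<dots> \<le> 2 * W n \<omega> * (r n k \<omega>)^2" using rk by (intro mult_right_mono) auto
        finally have gk: "\<bar>gfun (r n k \<omega>)\<bar> \<le> 2 * W n \<omega> * (r n k \<omega>)^2" .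
        have "\<bar>ln (Sa (p n k) \<omega>) * gfun (r n k \<omega>)\<bar> = \<bar>ln (Sa (p n k) \<omega>)\<bar> * \<bar>gfun (r n k \<omega>)\<bar>" by (simp add: abs_mult)
        also have "\<dots> \<le> MY n \<omega> * (2 * W n \<omega> * (r n k \<omega>)^2)"
          using yk gk by (intro mult_mono) auto
        finally show ?thesis by (simp add: algebra_simps)
      qed
      have "\<bar>\<Sum>k<N n. ln (Sa (p n k) \<omega>) * gfun (r n k \<omega>)\<bar> \<le> (\<Sum>k<N n. \<bar>ln (Sa (p n k) \<omega>) * gfun (r n k \<omega>)\<bar>)"
        by (rule sum_abs)
      also have "\<dots> \<le> (\<Sum>k<N n. 2 * MY n \<omega> * W n \<omega> * (r n k \<omega>)^2)"
        by (rule sum_mono) (use trm in auto)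
      also have "\<dots> = U n \<omega> * W n \<omega>" unfolding U_def SR_def by (simp add: sum_distrib_left algebra_simps)
      also have "\<dots> = \<bar>U n \<omega>\<bar> * \<bar>W n \<omega>\<bar>"
        using W0 MY0 unfolding U_def SR_def by (simp add: abs_mult sum_nonneg)
      finally show "\<bar>\<Sum>k<N n. ln (Sa (p n k) \<omega>) *
        gfun ((Sb (p n (Suc k)) \<omega> - Sb (p n k) \<omega>) / Sb (p n k) \<omega>)\<bar> \<le> \<bar>U n \<omega>\<bar> * \<bar>W n \<omega>\<bar>"
        unfolding r_def .
    qed
  qed (unfold gfun_def, measurable)
qed

end

lemma term_id:
  fixes a a' b b' :: real
  assumes "0 < a" "0 < a'" "0 < b" "0 < b'"
  shows "1 * (ln a' - ln a) * (ln b' - ln b) = (ln a' * ln b' - ln a * ln b)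
     - (ln a / b * (b' - b)) + 1/2 * (ln a / b^2 * (b' - b) * (b' - b))
     - (ln b / a * (a' - a)) + 1/2 * (ln b / a^2 * (a' - a) * (a' - a))
     - ln a * gfun ((b' - b) / b) - ln b * gfun ((a' - a) / a)"
proof -
  have gb: "gfun ((b' - b) / b) = (ln b' - ln b) - (b' - b) / b + ((b' - b) / b)^2 / 2"
  proof -
    have "1 + (b' - b) / b = b' / b" using assms by (simp add: field_simps)
    then show ?thesis unfolding gfun_def using assms by (simp add: ln_div)
  qed
  have ga: "gfun ((a' - a) / a) = (ln a' - ln a) - (a' - a) / a + ((a' - a) / a)^2 / 2"
  proof -
    have "1 + (a' - a) / a = a' / a" using assms by (simp add: field_simps)
    then show ?thesis unfolding gfun_def using assms by (simp add: ln_div)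
  qed
  have e1: "ln a / b * (b' - b) = ln a * ((b' - b) / b)" by simp
  have e2: "ln a / b^2 * (b' - b) * (b' - b) = ln a * ((b' - b) / b)^2" by (simp add: power2_eq_square)
  have e3: "ln b / a * (a' - a) = ln b * ((a' - a) / a)" by simp
  have e4: "ln b / a^2 * (a' - a) * (a' - a) = ln b * ((a' - a) / a)^2" by (simp add: power2_eq_square)
  show ?thesis unfolding ga gb e1 e2 e3 e4 by (simp add: algebra_simps)
qed

lemma final_alg:
  fixes x y \<alpha> \<beta> :: real
  assumes "0 < x" "0 < y" "0 < \<alpha>" "0 < \<beta>"
  shows "ln x * ln y - ln \<alpha> * ln \<beta> = ln \<alpha> / \<beta> * (y - \<beta>) + ln \<beta> / \<alpha> * (x - \<alpha>) - ln \<alpha> * Ffun y \<beta> - ln \<beta> * Ffun x \<alpha>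
                + (x - \<alpha>) * (y - \<beta>) / (\<alpha> * \<beta>) - (x - \<alpha>) / \<alpha> * Ffun y \<beta>
                - (y - \<beta>) / \<beta> * Ffun x \<alpha> + Ffun x \<alpha> * Ffun y \<beta>"
proof -
  define u where "u = (x - \<alpha>) / \<alpha>"
  define v where "v = (y - \<beta>) / \<beta>"
  have Fx: "Ffun x \<alpha> = u - ln x + ln \<alpha>" unfolding Ffun_def u_def using assms by (simp add: ln_div)
  have Fy: "Ffun y \<beta> = v - ln y + ln \<beta>" unfolding Ffun_def v_def using assms by (simp add: ln_div)
  have e1: "ln \<alpha> / \<beta> * (y - \<beta>) = ln \<alpha> * v" unfolding v_def by simp
  have e2: "ln \<beta> / \<alpha> * (x - \<alpha>) = ln \<beta> * u" unfolding u_def by simp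
  have e3: "(x - \<alpha>) * (y - \<beta>) / (\<alpha> * \<beta>) = u * v" unfolding u_def v_def by simp
  show ?thesis unfolding Fx Fy e1 e2 e3 u_def[symmetric] v_def[symmetric] by (simp add: algebra_simps)
qed

lemma unif_partition:
  fixes t T :: real
  assumes tT: "t < T"
  shows "partition_seq t T (\<lambda>n k. min T (t + real k * (T - t) / real (Suc n))) (\<lambda>n. Suc n)"
  unfolding partition_seq_def
proof (intro conjI allI)
  define h where "h n = (T - t) / real (Suc n)" for n
  have h0: "0 < h n" for n unfolding h_def using tT by simp
  have le: "t + real k * (T - t) / real (Suc n) \<le> T" if "k \<le> Suc n" for n k
  proof -
    have "real k * (T - t) \<le> real (Suc n) * (T - t)" using that tT by (intro mult_right_mono) auto
    then have "real k * (T - t) / real (Suc n) \<le> T - t" by (simp add: divide_le_eq mult.commute)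
    then show ?thesis by simp
  qed
  have eq: "min T (t + real k * (T - t) / real (Suc n)) = t + real k * h n" if "k \<le> Suc n" for n k
    using le[OF that] unfolding h_def by simp
  fix n k
  show "min T (t + real 0 * (T - t) / real (Suc n)) = t" using tT by simp
  show "min T (t + real (Suc n) * (T - t) / real (Suc n)) = T" by simp
  show "k < Suc n \<longrightarrow> min T (t + real k * (T - t) / real (Suc n)) < min T (t + real (Suc k) * (T - t) / real (Suc n))"
  proof (intro impI)
    assume "k < Suc n"
    then show "min T (t + real k * (T - t) / real (Suc n)) < min T (t + real (Suc k) * (T - t) / real (Suc n))"
      using eq[of k n] eq[of "Suc k" n] h0[of n] by (simp add: algebra_simps)
  qed
next
  define h where "h n = (T - t) / real (Suc n)" for n
  have le: "t + real k * (T - t) / real (Suc n) \<le> T" if "k \<le> Suc n" for n k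
  proof -
    have "real k * (T - t) \<le> real (Suc n) * (T - t)" using that tT by (intro mult_right_mono) auto
    then have "real k * (T - t) / real (Suc n) \<le> T - t" by (simp add: divide_le_eq mult.commute)
    then show ?thesis by simp
  qed
  have eq: "min T (t + real k * (T - t) / real (Suc n)) = t + real k * h n" if "k \<le> Suc n" for n k
    using le[OF that] unfolding h_def by simp
  have "(\<lambda>k. min T (t + real (Suc k) * (T - t) / real (Suc n)) - min T (t + real k * (T - t) / real (Suc n))) ` {..<Suc n} = (\<lambda>k. h n) ` {..<Suc n}" for n
  proof (rule image_cong[OF refl])
    fix k assume "k \<in> {..<Suc n}"
    then show "min T (t + real (Suc k) * (T - t) / real (Suc n)) - min T (t + real k * (T - t) / real (Suc n)) = h n"
      using eq[of k n] eq[of "Suc k" n] by (simp add: algebra_simps)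
  qed
  then have "(\<lambda>n. Max ((\<lambda>k. min T (t + real (Suc k) * (T - t) / real (Suc n)) - min T (t + real k * (T - t) / real (Suc n))) ` {..<Suc n})) = h"
  proof (intro ext)
    fix n
    assume im: "\<And>n. (\<lambda>k. min T (t + real (Suc k) * (T - t) / real (Suc n)) - min T (t + real k * (T - t) / real (Suc n))) ` {..<Suc n} = (\<lambda>k. h n) ` {..<Suc n}"
    have "{..<Suc n} \<noteq> {}" by auto
    then show "Max ((\<lambda>k. min T (t + real (Suc k) * (T - t) / real (Suc n)) - min T (t + real k * (T - t) / real (Suc n))) ` {..<Suc n}) = h n"
      by (subst im) (simp only: image_constant_conv if_False Max_singleton)
  qed
  moreover have "h \<longlonglongrightarrow> 0"
  proof -
    have "(\<lambda>n. (T - t) * inverse (real (Suc n))) \<longlonglongrightarrow> (T - t) * 0"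
      by (intro tendsto_mult tendsto_const LIMSEQ_inverse_real_of_nat)
    then show ?thesis unfolding h_def by (simp add: divide_inverse)
  qed
  ultimately show "(\<lambda>n. Max ((\<lambda>k. min T (t + real (Suc k) * (T - t) / real (Suc n)) - min T (t + real k * (T - t) / real (Suc n))) ` {..<Suc n})) \<longlonglongrightarrow> 0"
    by simp
qed

context prob_space begin

lemma conv_const: "conv_in_prob M (\<lambda>n. C) C"
  unfolding conv_in_prob_def by simp

lemma part_b:
  fixes Si Sj :: "real \<Rightarrow> 'a \<Rightarrow> real" and QC I1 I2 I3 I4 :: "'a \<Rightarrow> real"
  assumes filt: "is_filtration M F" and tT: "t < T"
    and smi: "cont_semimartingale_on M F t T Si" and smj: "cont_semimartingale_on M F t T Sj"
    and pos: "AE \<omega> in M. \<forall>u\<in>{t..T}. 0 < Si u \<omega> \<and> 0 < Sj u \<omega>"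
    and hQC: "is_qcov_integral M t T (\<lambda>u \<omega>. 1) (\<lambda>u \<omega>. ln (Si u \<omega>)) (\<lambda>u \<omega>. ln (Sj u \<omega>)) QC"
    and h1: "is_stoch_integral M t T (\<lambda>u \<omega>. ln (Si u \<omega>) / Sj u \<omega>) Sj I1"
    and h2: "is_stoch_integral M t T (\<lambda>u \<omega>. ln (Sj u \<omega>) / Si u \<omega>) Si I2"
    and h3: "is_qcov_integral M t T (\<lambda>u \<omega>. ln (Si u \<omega>) / (Sj u \<omega>)^2) Sj Sj I3"
    and h4: "is_qcov_integral M t T (\<lambda>u \<omega>. ln (Sj u \<omega>) / (Si u \<omega>)^2) Si Si I4"
  shows "AE \<omega> in M. QC \<omega> = ln (Si T \<omega>) * ln (Sj T \<omega>) - ln (Si t \<omega>) * ln (Sj t \<omega>)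
      - I1 \<omega> - I2 \<omega> + 1/2 * I3 \<omega> + 1/2 * I4 \<omega>"
proof -
  define p where "p n k = min T (t + real k * (T - t) / real (Suc n))" for n k
  define N where "N n = Suc n" for n :: nat
  have P: "partition_seq t T p N" unfolding p_def N_def by (rule unif_partition[OF tT])
  have pin: "p n k \<in> {t..T}" for n k unfolding p_def using tT by auto
  have pt: "p n 0 = t" "p n (N n) = T" for n using P unfolding partition_seq_def by auto
  have adi: "adapted_on F t T Si" using smi unfolding cont_semimartingale_on_def by blast
  have adj: "adapted_on F t T Sj" using smj unfolding cont_semimartingale_on_def by blast
  have measS [measurable]: "Si (p n k) \<in> borel_measurable M" "Sj (p n k) \<in> borel_measurable M" for n k
    using adi adj pin[of n k] filt_meas[OF filt] unfolding adapted_on_def by blast+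
  have [measurable]: "Si t \<in> borel_measurable M" "Sj t \<in> borel_measurable M"
     "Si T \<in> borel_measurable M" "Sj T \<in> borel_measurable M"
    using measS[of 0 0] measS[of 0 "N 0"] pt[of 0] by auto
  have good: "AE \<omega> in M. (\<forall>u\<in>{t..T}. 0 < Si u \<omega> \<and> 0 < Sj u \<omega>) \<and>
        continuous_on {t..T} (\<lambda>u. Si u \<omega>) \<and> continuous_on {t..T} (\<lambda>u. Sj u \<omega>)"
  proof -
    have ci: "AE \<omega> in M. continuous_on {t..T} (\<lambda>u. Si u \<omega>)"
      using smi unfolding cont_semimartingale_on_def continuous_paths_on_def by blast
    have cj: "AE \<omega> in M. continuous_on {t..T} (\<lambda>u. Sj u \<omega>)"
      using smj unfolding cont_semimartingale_on_def continuous_paths_on_def by blast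
    show ?thesis using pos ci cj by eventually_elim blast
  qed
  have good': "AE \<omega> in M. (\<forall>u\<in>{t..T}. 0 < Sj u \<omega> \<and> 0 < Si u \<omega>) \<and>
        continuous_on {t..T} (\<lambda>u. Sj u \<omega>) \<and> continuous_on {t..T} (\<lambda>u. Si u \<omega>)"
    using good by eventually_elim blast
  define QCn where "QCn n \<omega> = (\<Sum>k<N n. 1 * (ln (Si (p n (Suc k)) \<omega>) - ln (Si (p n k) \<omega>)) *
      (ln (Sj (p n (Suc k)) \<omega>) - ln (Sj (p n k) \<omega>)))" for n \<omega>
  define A1 where "A1 n \<omega> = (\<Sum>k<N n. ln (Si (p n k) \<omega>) / Sj (p n k) \<omega> * (Sj (p n (Suc k)) \<omega> - Sj (p n k) \<omega>))" for n \<omega>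
  define A2 where "A2 n \<omega> = (\<Sum>k<N n. ln (Sj (p n k) \<omega>) / Si (p n k) \<omega> * (Si (p n (Suc k)) \<omega> - Si (p n k) \<omega>))" for n \<omega>
  define A3 where "A3 n \<omega> = (\<Sum>k<N n. ln (Si (p n k) \<omega>) / (Sj (p n k) \<omega>)^2 * (Sj (p n (Suc k)) \<omega> - Sj (p n k) \<omega>)
      * (Sj (p n (Suc k)) \<omega> - Sj (p n k) \<omega>))" for n \<omega>
  define A4 where "A4 n \<omega> = (\<Sum>k<N n. ln (Sj (p n k) \<omega>) / (Si (p n k) \<omega>)^2 * (Si (p n (Suc k)) \<omega> - Si (p n k) \<omega>)
      * (Si (p n (Suc k)) \<omega> - Si (p n k) \<omega>))" for n \<omega>
  define Ei where "Ei n \<omega> = (\<Sum>k<N n. ln (Si (p n k) \<omega>) * gfun ((Sj (p n (Suc k)) \<omega> - Sj (p n k) \<omega>) / Sj (p n k) \<omega>))" for n \<omega>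
  define Ej where "Ej n \<omega> = (\<Sum>k<N n. ln (Sj (p n k) \<omega>) * gfun ((Si (p n (Suc k)) \<omega> - Si (p n k) \<omega>) / Si (p n k) \<omega>))" for n \<omega>
  define C where "C \<omega> = ln (Si T \<omega>) * ln (Sj T \<omega>) - ln (Si t \<omega>) * ln (Sj t \<omega>)" for \<omega>
  have gm [measurable]: "gfun \<in> borel_measurable borel" unfolding gfun_def by measurable
  have [measurable]: "QCn n \<in> borel_measurable M" for n unfolding QCn_def by (intro borel_measurable_sum) measurable
  have [measurable]: "A1 n \<in> borel_measurable M" for n unfolding A1_def by (intro borel_measurable_sum) measurable
  have [measurable]: "A2 n \<in> borel_measurable M" for n unfolding A2_def by (intro borel_measurable_sum) measurable
  have [measurable]: "A3 n \<in> borel_measurable M" for n unfolding A3_def by (intro borel_measurable_sum) measurable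
  have [measurable]: "A4 n \<in> borel_measurable M" for n unfolding A4_def by (intro borel_measurable_sum) measurable
  have [measurable]: "Ei n \<in> borel_measurable M" for n unfolding Ei_def by (intro borel_measurable_sum) measurable
  have [measurable]: "Ej n \<in> borel_measurable M" for n unfolding Ej_def by (intro borel_measurable_sum) measurable
  have [measurable]: "C \<in> borel_measurable M" unfolding C_def by measurable
  have [measurable]: "QC \<in> borel_measurable M" "I1 \<in> borel_measurable M" "I2 \<in> borel_measurable M"
    "I3 \<in> borel_measurable M" "I4 \<in> borel_measurable M"
    using hQC h1 h2 h3 h4 unfolding is_qcov_integral_def is_stoch_integral_def by auto
  have cQC: "conv_in_prob M QCn QC" using hQC P unfolding is_qcov_integral_def QCn_def by auto
  have c1: "conv_in_prob M A1 I1" using h1 P unfolding is_stoch_integral_def A1_def by auto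
  have c2: "conv_in_prob M A2 I2" using h2 P unfolding is_stoch_integral_def A2_def by auto
  have c3: "conv_in_prob M A3 I3" using h3 P unfolding is_qcov_integral_def A3_def by auto
  have c4: "conv_in_prob M A4 I4" using h4 P unfolding is_qcov_integral_def A4_def by auto
  have cEi: "conv_in_prob M Ei (\<lambda>_. 0)" unfolding Ei_def
    by (rule half_small[OF filt P pin smj adi good])
  have cEj: "conv_in_prob M Ej (\<lambda>_. 0)" unfolding Ej_def
    by (rule half_small[OF filt P pin smi adj good'])
  define Z where "Z n \<omega> = C \<omega> + (-1) * A1 n \<omega> + (1/2) * A3 n \<omega> + (-1) * A2 n \<omega> + (1/2) * A4 n \<omega>
      + (-1) * Ei n \<omega> + (-1) * Ej n \<omega>" for n \<omega>
  define Lim where "Lim \<omega> = C \<omega> + (-1) * I1 \<omega> + (1/2) * I3 \<omega> + (-1) * I2 \<omega> + (1/2) * I4 \<omega>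
      + (-1) * 0 + (-1) * 0" for \<omega>
  have cZ: "conv_in_prob M Z Lim"
    unfolding Z_def Lim_def
    by (intro conv_add conv_cmult conv_const cEi cEj c1 c2 c3 c4) measurable
  have eqZ: "AE \<omega> in M. Z n \<omega> = QCn n \<omega>" for n
    using pos
  proof (rule AE_mp, intro AE_I2 impI)
    fix \<omega> assume ps: "\<forall>u\<in>{t..T}. 0 < Si u \<omega> \<and> 0 < Sj u \<omega>"
    have ps': "0 < Si (p n k) \<omega>" "0 < Sj (p n k) \<omega>" for k using ps pin[of n k] by auto
    have "QCn n \<omega> = (\<Sum>k<N n. (ln (Si (p n (Suc k)) \<omega>) * ln (Sj (p n (Suc k)) \<omega>) - ln (Si (p n k) \<omega>) * ln (Sj (p n k) \<omega>))
     - (ln (Si (p n k) \<omega>) / Sj (p n k) \<omega> * (Sj (p n (Suc k)) \<omega> - Sj (p n k) \<omega>))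
     + 1/2 * (ln (Si (p n k) \<omega>) / (Sj (p n k) \<omega>)^2 * (Sj (p n (Suc k)) \<omega> - Sj (p n k) \<omega>) * (Sj (p n (Suc k)) \<omega> - Sj (p n k) \<omega>))
     - (ln (Sj (p n k) \<omega>) / Si (p n k) \<omega> * (Si (p n (Suc k)) \<omega> - Si (p n k) \<omega>))
     + 1/2 * (ln (Sj (p n k) \<omega>) / (Si (p n k) \<omega>)^2 * (Si (p n (Suc k)) \<omega> - Si (p n k) \<omega>) * (Si (p n (Suc k)) \<omega> - Si (p n k) \<omega>))
     - ln (Si (p n k) \<omega>) * gfun ((Sj (p n (Suc k)) \<omega> - Sj (p n k) \<omega>) / Sj (p n k) \<omega>)
     - ln (Sj (p n k) \<omega>) * gfun ((Si (p n (Suc k)) \<omega> - Si (p n k) \<omega>) / Si (p n k) \<omega>))"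
      unfolding QCn_def by (intro sum.cong refl term_id ps')
    also have "\<dots> = (\<Sum>k<N n. ln (Si (p n (Suc k)) \<omega>) * ln (Sj (p n (Suc k)) \<omega>) - ln (Si (p n k) \<omega>) * ln (Sj (p n k) \<omega>))
      - A1 n \<omega> + 1/2 * A3 n \<omega> - A2 n \<omega> + 1/2 * A4 n \<omega> - Ei n \<omega> - Ej n \<omega>"
      unfolding A1_def A2_def A3_def A4_def Ei_def Ej_def
      by (simp only: sum.distrib sum_subtractf sum_distrib_left)
    also have "(\<Sum>k<N n. ln (Si (p n (Suc k)) \<omega>) * ln (Sj (p n (Suc k)) \<omega>) - ln (Si (p n k) \<omega>) * ln (Sj (p n k) \<omega>)) = C \<omega>"
      unfolding C_def by (subst sum_lessThan_telescope[where f="\<lambda>k. ln (Si (p n k) \<omega>) * ln (Sj (p n k) \<omega>)"]) (simp add: pt)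
    finally show "Z n \<omega> = QCn n \<omega>" unfolding Z_def by simp
  qed
  have cQC': "conv_in_prob M QCn Lim"
    by (rule conv_AE_cong[OF _ _ _ cZ eqZ]) (unfold Z_def Lim_def, measurable)
  have "AE \<omega> in M. QC \<omega> = Lim \<omega>"
    by (rule conv_unique[OF _ _ _ cQC cQC']) (unfold Lim_def, measurable)
  then show ?thesis
    by (rule AE_mp) (auto intro!: AE_I2 simp: Lim_def C_def)
qed

end

lemma ftc_gen:
  fixes g G :: "real \<Rightarrow> real"
  assumes ab: "a \<le> b" and D: "\<And>K. a \<le> K \<Longrightarrow> K \<le> b \<Longrightarrow> (G has_real_derivative g K) (at K)"
    and c: "continuous_on {a..b} g"
  shows "(\<integral>K. indicator {a..b} K * g K \<partial>lborel) = G b - G a"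
proof -
  have "integral\<^sup>L lborel (\<lambda>x. indicator {a .. b} x *\<^sub>R g x) = G b - G a"
  proof (rule integral_FTC_atLeastAtMost[OF ab _ c])
    fix x assume "a \<le> x" "x \<le> b"
    then show "(G has_vector_derivative g x) (at x within {a..b})"
      using D by (simp add: has_real_derivative_iff_has_vector_derivative[symmetric] has_field_derivative_at_within)
  qed
  then show ?thesis by simp
qed

lemma ftc1:
  fixes a b c :: real
  assumes "0 < a" "a \<le> b"
  shows "(\<integral>K. indicator {a..b} K * ((K - c) / K^2) \<partial>lborel) = (ln b + c / b) - (ln a + c / a)"
proof (rule ftc_gen[where G="\<lambda>K. ln K + c / K"])
  fix K assume K: "a \<le> K" "K \<le> b"
  then have "0 < K" using assms by simp
  then have "((\<lambda>K. ln K + c / K) has_real_derivative (1 / K - c / K^2)) (at K)"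
    by (auto intro!: derivative_eq_intros simp: power2_eq_square field_simps)
  moreover have "1 / K - c / K^2 = (K - c) / K^2" using \<open>0 < K\<close> by (simp add: field_simps power2_eq_square)
  ultimately show "((\<lambda>K. ln K + c / K) has_real_derivative (K - c) / K^2) (at K)" by simp
next
  show "continuous_on {a..b} (\<lambda>K. (K - c) / K^2)" using assms by (intro continuous_intros) auto
qed (use assms in auto)

lemma ftc2:
  fixes a b c :: real
  assumes "0 < a" "a \<le> b"
  shows "(\<integral>K. indicator {a..b} K * ((c - K) / K^2) \<partial>lborel) = (- c / b - ln b) - (- c / a - ln a)"
proof (rule ftc_gen[where G="\<lambda>K. - c / K - ln K"])
  fix K assume K: "a \<le> K" "K \<le> b"
  then have "0 < K" using assms by simp
  then have "((\<lambda>K. - c / K - ln K) has_real_derivative (c / K^2 - 1 / K)) (at K)"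
    by (auto intro!: derivative_eq_intros simp: power2_eq_square field_simps)
  moreover have "c / K^2 - 1 / K = (c - K) / K^2" using \<open>0 < K\<close> by (simp add: field_simps power2_eq_square)
  ultimately show "((\<lambda>K. - c / K - ln K) has_real_derivative (c - K) / K^2) (at K)" by simp
next
  show "continuous_on {a..b} (\<lambda>K. (c - K) / K^2)" using assms by (intro continuous_intros) auto
qed (use assms in auto)

lemma Ffun_alt: "0 < x \<Longrightarrow> 0 < a \<Longrightarrow> Ffun x a = x / a - 1 - ln x + ln a"
  unfolding Ffun_def by (simp add: ln_div diff_divide_distrib)

lemma F_int1:
  assumes x: "0 < x" and a: "0 < \<alpha>"
  shows "(\<integral>K. indicator {0<..} K * ((max (K - x) 0 * (if K \<le> \<alpha> then 1 else 0)
      + max (x - K) 0 * (if K > \<alpha> then 1 else 0)) / K^2) \<partial>lborel) = Ffun x \<alpha>"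
proof (cases "x < \<alpha>")
  case True
  have "(\<integral>K. indicator {0<..} K * ((max (K - x) 0 * (if K \<le> \<alpha> then 1 else 0)
      + max (x - K) 0 * (if K > \<alpha> then 1 else 0)) / K^2) \<partial>lborel)
      = (\<integral>K. indicator {x..\<alpha>} K * ((K - x) / K^2) \<partial>lborel)"
    by (rule Bochner_Integration.integral_cong[OF refl]) (use True x in \<open>auto simp: indicator_def max_def\<close>)
  also have "\<dots> = Ffun x \<alpha>" using ftc1[of x \<alpha> x] True x a by (simp add: Ffun_alt)
  finally show ?thesis .
next
  case False
  have "(\<integral>K. indicator {0<..} K * ((max (K - x) 0 * (if K \<le> \<alpha> then 1 else 0)
      + max (x - K) 0 * (if K > \<alpha> then 1 else 0)) / K^2) \<partial>lborel)
      = (\<integral>K. indicator {\<alpha>..x} K * ((x - K) / K^2) \<partial>lborel)"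
  proof (rule integral_cong_AE)
    show "AE K in lborel. indicator {0<..} K * ((max (K - x) 0 * (if K \<le> \<alpha> then 1 else 0)
      + max (x - K) 0 * (if K > \<alpha> then 1 else 0)) / K^2) = indicator {\<alpha>..x} K * ((x - K) / K^2)"
      using AE_lborel_singleton[of \<alpha>]
    proof (rule AE_mp, intro AE_I2 impI)
      fix K :: real assume "K \<noteq> \<alpha>"
      then show "indicator {0<..} K * ((max (K - x) 0 * (if K \<le> \<alpha> then 1 else 0)
        + max (x - K) 0 * (if K > \<alpha> then 1 else 0)) / K^2) = indicator {\<alpha>..x} K * ((x - K) / K^2)"
        using False x a by (auto simp: indicator_def max_def)
    qed
  qed measurable
  also have "\<dots> = Ffun x \<alpha>" using ftc2[of \<alpha> x x] False x a by (simp add: Ffun_alt)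
  finally show ?thesis .
qed

lemma F_int_a1:
  assumes z: "0 < z" and z0: "0 < z0"
  shows "Ffun z z0 = (LINT K:{0<..z0}|lborel. max (K - z) 0 / K^2) + (LINT K:{z0..}|lborel. max (z - K) 0 / K^2)"
proof (cases "z < z0")
  case True
  have "(LINT K:{0<..z0}|lborel. max (K - z) 0 / K^2) = (\<integral>K. indicator {z..z0} K * ((K - z) / K^2) \<partial>lborel)"
    unfolding set_lebesgue_integral_def
    by (rule Bochner_Integration.integral_cong[OF refl]) (use True z in \<open>auto simp: indicator_def max_def\<close>)
  also have "\<dots> = Ffun z z0" using ftc1[of z z0 z] True z z0 by (simp add: Ffun_alt)
  finally have 1: "(LINT K:{0<..z0}|lborel. max (K - z) 0 / K^2) = Ffun z z0" .
  have "(\<lambda>K. indicator {z0..} K *\<^sub>R (max (z - K) 0 / K^2)) = (\<lambda>K. (0::real))"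
    using True by (auto simp: indicator_def max_def)
  then have "(LINT K:{z0..}|lborel. max (z - K) 0 / K^2) = 0"
    unfolding set_lebesgue_integral_def by simp
  then show ?thesis using 1 by simp
next
  case False
  have "(LINT K:{z0..}|lborel. max (z - K) 0 / K^2) = (\<integral>K. indicator {z0..z} K * ((z - K) / K^2) \<partial>lborel)"
    unfolding set_lebesgue_integral_def
    by (rule Bochner_Integration.integral_cong[OF refl]) (use False in \<open>auto simp: indicator_def max_def\<close>)
  also have "\<dots> = Ffun z z0" using ftc2[of z0 z z] False z z0 by (simp add: Ffun_alt)
  finally have 2: "(LINT K:{z0..}|lborel. max (z - K) 0 / K^2) = Ffun z z0" .
  have "(\<lambda>K. indicator {0<..z0} K *\<^sub>R (max (K - z) 0 / K^2)) = (\<lambda>K. (0::real))"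
    using False by (auto simp: indicator_def max_def)
  then have "(LINT K:{0<..z0}|lborel. max (K - z) 0 / K^2) = 0"
    unfolding set_lebesgue_integral_def by simp
  then show ?thesis using 2 by simp
qed

definition fac :: "real \<Rightarrow> real \<Rightarrow> real \<Rightarrow> real" where
  "fac a z u = max (u - z) 0 * (if u \<le> a then 1 else 0) + max (z - u) 0 * (if u > a then 1 else 0)"

lemma fac_nonneg: "0 \<le> fac a z u" unfolding fac_def by auto

lemma fac_meas [measurable]: "fac a z \<in> borel_measurable borel"
  unfolding fac_def by measurable

lemma F_prod:
  assumes x: "0 < x" and y: "0 < y" and a: "0 < \<alpha>" and b: "0 < \<beta>"
  shows "Ffun x \<alpha> * Ffun y \<beta> =
          (LINT K:({0<..} \<times> {0<..})|lborel. Pi_ij \<alpha> \<beta> x y (fst K) (snd K) / ((fst K)^2 * (snd K)^2))"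
proof -
  define f1 where "f1 u = indicator {0<..} u * (fac \<alpha> x u / u^2)" for u :: real
  define f2 where "f2 u = indicator {0<..} u * (fac \<beta> y u / u^2)" for u :: real
  have [measurable]: "f1 \<in> borel_measurable borel" "f2 \<in> borel_measurable borel"
    unfolding f1_def f2_def by measurable
  have nn1: "0 \<le> f1 u" for u unfolding f1_def by (intro mult_nonneg_nonneg divide_nonneg_nonneg fac_nonneg) auto
  have nn2: "0 \<le> f2 u" for u unfolding f2_def by (intro mult_nonneg_nonneg divide_nonneg_nonneg fac_nonneg) auto
  have i1: "(\<integral>u. f1 u \<partial>lborel) = Ffun x \<alpha>"
    unfolding f1_def fac_def by (rule F_int1[OF x a])
  have i2: "(\<integral>u. f2 u \<partial>lborel) = Ffun y \<beta>"
    unfolding f2_def fac_def by (rule F_int1[OF y b])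
  have sc: "(p * q) * (r * s / (u * v)) = (p * (r / u)) * (q * (s / v))" for p q r s u v :: real
    by (simp add: divide_inverse inverse_mult_distrib mult_ac)
  have "(LINT K:({0<..} \<times> {0<..})|lborel. Pi_ij \<alpha> \<beta> x y (fst K) (snd K) / ((fst K)^2 * (snd K)^2))
      = (\<integral>K. f1 (fst K) * f2 (snd K) \<partial>lborel)"
    unfolding set_lebesgue_integral_def
  proof (rule Bochner_Integration.integral_cong[OF refl])
    fix K :: "real \<times> real"
    obtain u v where K: "K = (u, v)" by (cases K)
    have "Pi_ij \<alpha> \<beta> x y u v = fac \<alpha> x u * fac \<beta> y v" unfolding Pi_ij_def fac_def ..
    then show "indicator ({0<..} \<times> {0<..}) K *\<^sub>R (Pi_ij \<alpha> \<beta> x y (fst K) (snd K) / ((fst K)^2 * (snd K)^2))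
      = f1 (fst K) * f2 (snd K)"
      unfolding f1_def f2_def K indicator_times fst_conv snd_conv real_scaleR_def by (simp only: sc)
  qed
  also have "\<dots> = (\<integral>K. f1 (fst K) * f2 (snd K) \<partial>(lborel \<Otimes>\<^sub>M lborel))"
    by (simp only: lborel_prod)
  also have "\<dots> = enn2real (\<integral>\<^sup>+K. ennreal (f1 (fst K) * f2 (snd K)) \<partial>(lborel \<Otimes>\<^sub>M lborel))"
    by (rule integral_eq_nn_integral) (measurable, intro AE_I2 mult_nonneg_nonneg nn1 nn2)
  also have "(\<integral>\<^sup>+K. ennreal (f1 (fst K) * f2 (snd K)) \<partial>(lborel \<Otimes>\<^sub>M lborel))
      = (\<integral>\<^sup>+u. \<integral>\<^sup>+v. ennreal (f1 u * f2 v) \<partial>lborel \<partial>lborel)"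
    using lborel.nn_integral_fst[of "\<lambda>K. ennreal (f1 (fst K) * f2 (snd K))" lborel] by simp
  also have "\<dots> = (\<integral>\<^sup>+u. ennreal (f1 u) * (\<integral>\<^sup>+v. ennreal (f2 v) \<partial>lborel) \<partial>lborel)"
  proof (intro nn_integral_cong)
    fix u
    have "(\<integral>\<^sup>+v. ennreal (f1 u) * ennreal (f2 v) \<partial>lborel) = ennreal (f1 u) * (\<integral>\<^sup>+v. ennreal (f2 v) \<partial>lborel)"
      by (rule nn_integral_cmult) measurable
    then show "(\<integral>\<^sup>+v. ennreal (f1 u * f2 v) \<partial>lborel) = ennreal (f1 u) * (\<integral>\<^sup>+v. ennreal (f2 v) \<partial>lborel)"
      by (simp add: ennreal_mult nn1 nn2)
  qed
  also have "\<dots> = (\<integral>\<^sup>+u. ennreal (f1 u) \<partial>lborel) * (\<integral>\<^sup>+v. ennreal (f2 v) \<partial>lborel)"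
    by (rule nn_integral_multc) measurable
  also have "enn2real \<dots> = (\<integral>u. f1 u \<partial>lborel) * (\<integral>v. f2 v \<partial>lborel)"
    unfolding enn2real_mult
    by (subst (1 2) integral_eq_nn_integral) (auto intro!: AE_I2 nn1 nn2)
  finally show ?thesis using i1 i2 by simp
qed

theorem mainTheorem6:
  fixes M :: "'a measure" and F :: "real \<Rightarrow> 'a measure"
    and Si Sj :: "real \<Rightarrow> 'a \<Rightarrow> real" and t T :: real
    and QC I1 I2 I3 I4 :: "'a \<Rightarrow> real"
  assumes "prob_space M" and "is_filtration M F"
    and "0 \<le> t" and "t < T"
    and "cont_semimartingale_on M F t T Si" and "cont_semimartingale_on M F t T Sj"
    and "AE \<omega> in M. \<forall>u\<in>{t..T}. 0 < Si u \<omega> \<and> 0 < Sj u \<omega>"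
  defines "Yi \<equiv> \<lambda>u \<omega>. ln (Si u \<omega>)" and "Yj \<equiv> \<lambda>u \<omega>. ln (Sj u \<omega>)"
  assumes "is_qcov_integral M t T (\<lambda>u \<omega>. 1) Yi Yj QC"
    and "is_stoch_integral M t T (\<lambda>u \<omega>. Yi u \<omega> / Sj u \<omega>) Sj I1"
    and "is_stoch_integral M t T (\<lambda>u \<omega>. Yj u \<omega> / Si u \<omega>) Si I2"
    and "is_qcov_integral M t T (\<lambda>u \<omega>. Yi u \<omega> / (Sj u \<omega>)^2) Sj Sj I3"
    and "is_qcov_integral M t T (\<lambda>u \<omega>. Yj u \<omega> / (Si u \<omega>)^2) Si Si I4"
  shows
    "(\<forall>z z0. 0 < z \<longrightarrow> 0 < z0 \<longrightarrow>
        Ffun z z0 = (LINT K:{0<..z0}|lborel. max (K - z) 0 / K^2)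
                  + (LINT K:{z0..}|lborel. max (z - K) 0 / K^2))
   \<and> (\<forall>x y \<alpha> \<beta>. 0 < x \<longrightarrow> 0 < y \<longrightarrow> 0 < \<alpha> \<longrightarrow> 0 < \<beta> \<longrightarrow>
        Ffun x \<alpha> * Ffun y \<beta> =
          (LINT K:({0<..} \<times> {0<..})|lborel.
              Pi_ij \<alpha> \<beta> x y (fst K) (snd K) / ((fst K)^2 * (snd K)^2)))
   \<and> (AE \<omega> in M.
        (let x = Si T \<omega>; y = Sj T \<omega>; \<alpha> = Si t \<omega>; \<beta> = Sj t \<omega>; yi = Yi t \<omega>; yj = Yj t \<omega> in
         QC \<omega> = yi / \<beta> * (y - \<beta>) + yj / \<alpha> * (x - \<alpha>) - yi * Ffun y \<beta> - yj * Ffun x \<alpha>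
                + (x - \<alpha>) * (y - \<beta>) / (\<alpha> * \<beta>) - (x - \<alpha>) / \<alpha> * Ffun y \<beta>
                - (y - \<beta>) / \<beta> * Ffun x \<alpha> + Ffun x \<alpha> * Ffun y \<beta>
                - I1 \<omega> - I2 \<omega> + 1/2 * I3 \<omega> + 1/2 * I4 \<omega>))
   \<and> (\<forall>x y a b :: real. (x - a) * (y - b) =
        Call a x * Call b y - Call a x * Put b y - Put a x * Call b y + Put a x * Put b y)"
proof -
  interpret prob_space M by fact
  have filt: "is_filtration M F" by fact
  have tT: "t < T" by fact
  have pos: "AE \<omega> in M. \<forall>u\<in>{t..T}. 0 < Si u \<omega> \<and> 0 < Sj u \<omega>" by fact
  have pA1: "\<forall>z z0. 0 < z \<longrightarrow> 0 < z0 \<longrightarrow>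
        Ffun z z0 = (LINT K:{0<..z0}|lborel. max (K - z) 0 / K^2)
                  + (LINT K:{z0..}|lborel. max (z - K) 0 / K^2)"
    using F_int_a1 by blast
  have pA2: "\<forall>x y \<alpha> \<beta>. 0 < x \<longrightarrow> 0 < y \<longrightarrow> 0 < \<alpha> \<longrightarrow> 0 < \<beta> \<longrightarrow>
        Ffun x \<alpha> * Ffun y \<beta> =
          (LINT K:({0<..} \<times> {0<..})|lborel.
              Pi_ij \<alpha> \<beta> x y (fst K) (snd K) / ((fst K)^2 * (snd K)^2))"
    using F_prod by blast
  have pC: "\<forall>x y a b :: real. (x - a) * (y - b) =
        Call a x * Call b y - Call a x * Put b y - Put a x * Call b y + Put a x * Put b y"
  proof (intro allI)
    fix x y a b :: real
    have e: "Call a z - Put a z = z - a" for a z :: real unfolding Call_def Put_def by (simp add: max_def)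
    have "(x - a) * (y - b) = (Call a x - Put a x) * (Call b y - Put b y)" by (simp only: e)
    then show "(x - a) * (y - b) =
        Call a x * Call b y - Call a x * Put b y - Put a x * Call b y + Put a x * Put b y"
      by (simp add: algebra_simps)
  qed
  have qb: "AE \<omega> in M. QC \<omega> = ln (Si T \<omega>) * ln (Sj T \<omega>) - ln (Si t \<omega>) * ln (Sj t \<omega>)
      - I1 \<omega> - I2 \<omega> + 1/2 * I3 \<omega> + 1/2 * I4 \<omega>"
  proof (rule part_b[OF filt tT])
    show "cont_semimartingale_on M F t T Si" "cont_semimartingale_on M F t T Sj" by fact+
    show "AE \<omega> in M. \<forall>u\<in>{t..T}. 0 < Si u \<omega> \<and> 0 < Sj u \<omega>" by fact
    show "is_qcov_integral M t T (\<lambda>u \<omega>. 1) (\<lambda>u \<omega>. ln (Si u \<omega>)) (\<lambda>u \<omega>. ln (Sj u \<omega>)) QC"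
      using \<open>is_qcov_integral M t T (\<lambda>u \<omega>. 1) Yi Yj QC\<close> unfolding Yi_def Yj_def .
    show "is_stoch_integral M t T (\<lambda>u \<omega>. ln (Si u \<omega>) / Sj u \<omega>) Sj I1"
      using \<open>is_stoch_integral M t T (\<lambda>u \<omega>. Yi u \<omega> / Sj u \<omega>) Sj I1\<close> unfolding Yi_def Yj_def .
    show "is_stoch_integral M t T (\<lambda>u \<omega>. ln (Sj u \<omega>) / Si u \<omega>) Si I2"
      using \<open>is_stoch_integral M t T (\<lambda>u \<omega>. Yj u \<omega> / Si u \<omega>) Si I2\<close> unfolding Yi_def Yj_def .
    show "is_qcov_integral M t T (\<lambda>u \<omega>. ln (Si u \<omega>) / (Sj u \<omega>)^2) Sj Sj I3"
      using \<open>is_qcov_integral M t T (\<lambda>u \<omega>. Yi u \<omega> / (Sj u \<omega>)^2) Sj Sj I3\<close> unfolding Yi_def Yj_def .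
    show "is_qcov_integral M t T (\<lambda>u \<omega>. ln (Sj u \<omega>) / (Si u \<omega>)^2) Si Si I4"
      using \<open>is_qcov_integral M t T (\<lambda>u \<omega>. Yj u \<omega> / (Si u \<omega>)^2) Si Si I4\<close> unfolding Yi_def Yj_def .
  qed
  have pB: "AE \<omega> in M.
        (let x = Si T \<omega>; y = Sj T \<omega>; \<alpha> = Si t \<omega>; \<beta> = Sj t \<omega>; yi = Yi t \<omega>; yj = Yj t \<omega> in
         QC \<omega> = yi / \<beta> * (y - \<beta>) + yj / \<alpha> * (x - \<alpha>) - yi * Ffun y \<beta> - yj * Ffun x \<alpha>
                + (x - \<alpha>) * (y - \<beta>) / (\<alpha> * \<beta>) - (x - \<alpha>) / \<alpha> * Ffun y \<beta>
                - (y - \<beta>) / \<beta> * Ffun x \<alpha> + Ffun x \<alpha> * Ffun y \<beta>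
                - I1 \<omega> - I2 \<omega> + 1/2 * I3 \<omega> + 1/2 * I4 \<omega>)"
    using qb pos
  proof eventually_elim
    case (elim \<omega>)
    have p: "0 < Si T \<omega>" "0 < Sj T \<omega>" "0 < Si t \<omega>" "0 < Sj t \<omega>"
      using elim(2) tT by auto
    note fa = final_alg[OF p]
    show ?case unfolding Let_def Yi_def Yj_def using elim(1) fa by linarith
  qed
  show ?thesis using pA1 pA2 pB pC by blast
qed

end
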